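(* If $M$ and $N$ are tame manifolds with equivalent models, then $M$ and $N$ are properly homotopy equivalent.
   Context: A manifold $M$ without boundary is tame if there exists a compact connected (topological) manifold $W$ with boundary such that $M$ is homeomorphic to $W \setminus \partial W$. A model of a tame manifold $M$ is a finite CW-pair $(X,A)$ (finite CW-complex $X$ with finite subcomplex $A$) that is homotopy equivalent as a pair of spaces to $(W,\partial W)$, where $W$ is a compact connected manifold with boundary whose interior is homeomorphic to $M$. Two models are equivalent if they are homotopy equivalent as pairs of spaces. Proper homotopy equivalence means homotopy equivalence via proper maps and proper homotopies. *)

theory Defs
  imports "HOL-Analysis.Analysis"
begin

section \<open>Euclidean pieces (subspaces of Euclidean_space n, coordinates 0..n-1)\<close>

definition half_space :: "nat \<Rightarrow> (nat \<Rightarrow> real) topology" where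
  "half_space n = subtopology (Euclidean_space n)
      {x. n = 0 \<or> x 0 \<ge> 0}"

definition closed_disk :: "nat \<Rightarrow> (nat \<Rightarrow> real) topology" where
  "closed_disk n = subtopology (Euclidean_space n) {x. (\<Sum>i<n. x i ^ 2) \<le> 1}"

definition open_disk_set :: "nat \<Rightarrow> (nat \<Rightarrow> real) set" where
  "open_disk_set n = {x \<in> topspace (Euclidean_space n). (\<Sum>i<n. x i ^ 2) < 1}"

definition disk_boundary_set :: "nat \<Rightarrow> (nat \<Rightarrow> real) set" where
  "disk_boundary_set n = {x \<in> topspace (Euclidean_space n). (\<Sum>i<n. x i ^ 2) = 1}"

definition manifold_with_boundary_dim :: "nat \<Rightarrow> 'a topology \<Rightarrow> bool" where
  "manifold_with_boundary_dim n W \<longleftrightarrow>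
     Hausdorff_space W \<and> second_countable W \<and>
     (\<forall>x \<in> topspace W. \<exists>U V. openin W U \<and> x \<in> U \<and> openin (half_space n) V \<and>
          subtopology W U homeomorphic_space subtopology (half_space n) V)"

definition manifold_with_boundary :: "'a topology \<Rightarrow> bool" where
  "manifold_with_boundary W \<longleftrightarrow> (\<exists>n. manifold_with_boundary_dim n W)"

definition manifold_interior :: "'a topology \<Rightarrow> 'a set" where
  "manifold_interior W = {x \<in> topspace W. \<exists>n U V. openin W U \<and> x \<in> U \<and>
        openin (Euclidean_space n) V \<and>
        subtopology W U homeomorphic_space subtopology (Euclidean_space n) V}"

definition manifold_boundary :: "'a topology \<Rightarrow> 'a set" where
  "manifold_boundary W = topspace W - manifold_interior W"

definition tame_compactification :: "'w topology \<Rightarrow> 'a topology \<Rightarrow> bool" where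
  "tame_compactification W M \<longleftrightarrow>
     manifold_with_boundary W \<and> compact_space W \<and> connected_space W \<and>
     M homeomorphic_space subtopology W (manifold_interior W)"

definition tame :: "'w itself \<Rightarrow> 'a topology \<Rightarrow> bool" where
  "tame (_ :: 'w itself) M \<longleftrightarrow> (\<exists>W :: 'w topology. tame_compactification W M)"

text \<open>A finite CW structure: finitely many cells (indexed by a finite set I), each with a
  characteristic map from the closed disk of dimension d i that is a homeomorphism from the
  open disk onto its image (the open cell); the open cells partition the space and the
  boundary sphere of each cell is mapped into the union of cells of lower dimension.
  (Closure finiteness and the weak topology are automatic for finitely many cells.)\<close>
definition CW_structure ::
  "'a topology \<Rightarrow> nat set \<Rightarrow> (nat \<Rightarrow> nat) \<Rightarrow> (nat \<Rightarrow> (nat \<Rightarrow> real) \<Rightarrow> 'a) \<Rightarrow> bool" where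
  "CW_structure X I d \<Phi> \<longleftrightarrow>
     Hausdorff_space X \<and> finite I \<and>
     (\<forall>i\<in>I. continuous_map (closed_disk (d i)) X (\<Phi> i)) \<and>
     (\<forall>i\<in>I. homeomorphic_map (subtopology (Euclidean_space (d i)) (open_disk_set (d i)))
                 (subtopology X (\<Phi> i ` open_disk_set (d i))) (\<Phi> i)) \<and>
     (\<forall>i\<in>I. \<forall>j\<in>I. i \<noteq> j \<longrightarrow> \<Phi> i ` open_disk_set (d i) \<inter> \<Phi> j ` open_disk_set (d j) = {}) \<and>
     (\<Union>i\<in>I. \<Phi> i ` open_disk_set (d i)) = topspace X \<and>
     (\<forall>i\<in>I. \<Phi> i ` disk_boundary_set (d i) \<subseteq>
               (\<Union>j\<in>{j\<in>I. d j < d i}. \<Phi> j ` open_disk_set (d j)))"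

definition finite_CW_pair :: "'a topology \<Rightarrow> 'a set \<Rightarrow> bool" where
  "finite_CW_pair X A \<longleftrightarrow>
     (\<exists>I d \<Phi> J. CW_structure X I d \<Phi> \<and> J \<subseteq> I \<and>
        A = (\<Union>j\<in>J. \<Phi> j ` open_disk_set (d j)) \<and> closedin X A)"

definition pair_map :: "'a topology \<Rightarrow> 'a set \<Rightarrow> 'b topology \<Rightarrow> 'b set \<Rightarrow> ('a \<Rightarrow> 'b) \<Rightarrow> bool" where
  "pair_map X A Y B f \<longleftrightarrow> continuous_map X Y f \<and> f ` A \<subseteq> B"

definition pair_homotopy_equivalent ::
  "'a topology \<Rightarrow> 'a set \<Rightarrow> 'b topology \<Rightarrow> 'b set \<Rightarrow> bool" where
  "pair_homotopy_equivalent X A Y B \<longleftrightarrow>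
     (\<exists>f g. pair_map X A Y B f \<and> pair_map Y B X A g \<and>
        homotopic_with (\<lambda>h. h ` A \<subseteq> A) X X (g \<circ> f) id \<and>
        homotopic_with (\<lambda>h. h ` B \<subseteq> B) Y Y (f \<circ> g) id)"

definition model_via :: "'w topology \<Rightarrow> 'a topology \<Rightarrow> 'c topology \<Rightarrow> 'c set \<Rightarrow> bool" where
  "model_via W M X A \<longleftrightarrow>
     finite_CW_pair X A \<and> tame_compactification W M \<and>
     pair_homotopy_equivalent X A W (manifold_boundary W)"

definition proper_cont :: "'a topology \<Rightarrow> 'b topology \<Rightarrow> ('a \<Rightarrow> 'b) \<Rightarrow> bool" where
  "proper_cont X Y f \<longleftrightarrow> continuous_map X Y f \<and>
     (\<forall>K. compactin Y K \<longrightarrow> compactin X {x \<in> topspace X. f x \<in> K})"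

definition proper_homotopic :: "'a topology \<Rightarrow> 'b topology \<Rightarrow> ('a \<Rightarrow> 'b) \<Rightarrow> ('a \<Rightarrow> 'b) \<Rightarrow> bool" where
  "proper_homotopic X Y f g \<longleftrightarrow>
     (\<exists>H. proper_cont (prod_topology (top_of_set {0..1::real}) X) Y H \<and>
        (\<forall>x\<in>topspace X. H (0, x) = f x) \<and> (\<forall>x\<in>topspace X. H (1, x) = g x))"

definition proper_homotopy_equivalent :: "'a topology \<Rightarrow> 'b topology \<Rightarrow> bool" where
  "proper_homotopy_equivalent X Y \<longleftrightarrow>
     (\<exists>f g. proper_cont X Y f \<and> proper_cont Y X g \<and>
        proper_homotopic X X (g \<circ> f) id \<and> proper_homotopic Y Y (f \<circ> g) id)"

end

theory Submission
  imports Defs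
begin


context Metric_space begin
lemma zero_set_aux:
  assumes "closedin mtopology S" "S \<noteq> {}"
  shows "continuous_map mtopology euclideanreal (\<lambda>u. Inf (d u ` S))"
    and "\<And>x. x \<in> M \<Longrightarrow> Inf (d x ` S) \<ge> 0"
    and "\<And>x. x \<in> M \<Longrightarrow> Inf (d x ` S) = 0 \<longleftrightarrow> x \<in> S"
proof -
  have SM: "S \<subseteq> M" using assms closedin_subset by fastforce
  have [simp]: "bdd_below (d u ` A)" for u A
    by (meson bdd_belowI2 nonneg)
  have "dist (Inf (d x ` S)) (Inf (d y ` S)) \<le> d x y" if "x \<in> M" "y \<in> M" for x y
  proof -
    have "\<And>u. u \<in> S \<Longrightarrow> Inf (d x ` S) \<le> d x y + d y u"
    proof -
      fix u assume "u \<in> S"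
      then have "Inf (d x ` S) \<le> d x u" by (simp add: cINF_lower)
      also have "\<dots> \<le> d x y + d y u" using SM \<open>u \<in> S\<close> that by (simp add: subsetD triangle)
      finally show "Inf (d x ` S) \<le> d x y + d y u" .
    qed
    then have "Inf (d x ` S) - d x y \<le> Inf (d y ` S)"
      using assms(2) by (force simp add: le_cInf_iff)
    moreover
    have "\<And>u. u \<in> S \<Longrightarrow> Inf (d y ` S) \<le> d x u + d x y"
    proof -
      fix u assume "u \<in> S"
      then have "Inf (d y ` S) \<le> d y u" by (simp add: cINF_lower)
      also have "\<dots> \<le> d x u + d x y" using SM \<open>u \<in> S\<close> that
        by (metis add.commute commute subsetD triangle)
      finally show "Inf (d y ` S) \<le> d x u + d x y" .
    qed
    then have "Inf (d y ` S) - d x y \<le> Inf (d x ` S)"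
      using assms(2) by (force simp add: le_cInf_iff)
    ultimately show ?thesis
      by (simp add: dist_real_def abs_le_iff)
  qed
  then have *: "Lipschitz_continuous_map Self euclidean_metric (\<lambda>u. Inf (d u ` S))"
    unfolding Lipschitz_continuous_map_def by (force intro!: exI [where x=1])
  then show "continuous_map mtopology euclideanreal (\<lambda>u. Inf (d u ` S))"
    using Lipschitz_continuous_imp_continuous_map [OF *] by (simp add: Self_def)
  show "\<And>x. x \<in> M \<Longrightarrow> Inf (d x ` S) \<ge> 0"
    using assms(2) by (simp add: le_cInf_iff)
  fix x assume "x \<in> M"
  show "Inf (d x ` S) = 0 \<longleftrightarrow> x \<in> S"
  proof
    assume "x \<in> S"
    then show "Inf (d x ` S) = 0"
    proof -
      have "Inf (d x ` S) \<le> d x x" using \<open>x \<in> S\<close> by (simp add: cINF_lower)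
      moreover have "Inf (d x ` S) \<ge> 0" using assms(2) by (simp add: le_cInf_iff)
      ultimately show ?thesis using \<open>x \<in> M\<close> by simp
    qed
  next
    assume 0: "Inf (d x ` S) = 0"
    show "x \<in> S"
    proof (rule ccontr)
      assume "x \<notin> S"
      then have "openin mtopology (M - S)" "x \<in> M - S" using assms \<open>x \<in> M\<close> by (auto simp: openin_diff)
      then obtain r where "r>0" and r: "\<And>y. \<lbrakk>y \<in> M; d x y < r\<rbrakk> \<Longrightarrow> y \<in> M - S"
        by (meson in_mball openin_mtopology subsetD)
      then have "\<And>y. y \<in> S \<Longrightarrow> d x y \<ge> r"
        using SM by (meson Diff_iff linorder_not_le subsetD)
      then have "Inf (d x ` S) \<ge> r"
        using assms(2) by (simp add: le_cInf_iff)
      with \<open>r>0\<close> 0 show False by simp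
    qed
  qed
qed
end

lemma metrizable_zero_set:
  assumes "metrizable_space X" "closedin X S"
  obtains g where "continuous_map X euclideanreal g" "\<And>x. x \<in> topspace X \<Longrightarrow> g x \<ge> 0"
    "\<And>x. x \<in> topspace X \<Longrightarrow> g x = 0 \<longleftrightarrow> x \<in> S"
proof (cases "S = {}")
  case True
  show ?thesis by (rule that[of "\<lambda>_. 1"]) (auto simp: True)
next
  case False
  obtain M d where md: "Metric_space M d" "Metric_space.mtopology M d = X"
    using assms(1) unfolding metrizable_space_def by blast
  interpret Metric_space M d by (fact md)
  show ?thesis
    using zero_set_aux[of S] md assms False that[of "\<lambda>u. Inf (d u ` S)"] by auto
qed


lemma reg_shrink:
  assumes "regular_space X" "openin X W" "x \<in> W"
  obtains U where "openin X U" "x \<in> U" "X closure_of U \<subseteq> W"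
proof -
  have WX: "W \<subseteq> topspace X" by (rule openin_subset[OF assms(2)])
  have "closedin X (topspace X - W)" using assms(2) by (simp add: closedin_diff)
  moreover have "x \<in> topspace X - (topspace X - W)" using WX assms(3) by auto
  ultimately obtain U where U: "openin X U" "x \<in> U" "disjnt (topspace X - W) (X closure_of U)"
    using assms(1) unfolding regular_space by blast
  have "X closure_of U \<subseteq> W"
    using U(3) closure_of_subset_topspace[of X U] unfolding disjnt_def by blast
  then show ?thesis using that U by blast
qed

lemma bump:
  assumes X: "compact_space X" "Hausdorff_space X" and W: "openin X W" "x \<in> W"
  obtains Q Q2 u where "openin X Q" "x \<in> Q" "openin X Q2" "Q \<subseteq> Q2" "X closure_of Q2 \<subseteq> W"
    "continuous_map X euclideanreal u" "\<And>y. y \<in> topspace X \<Longrightarrow> 0 \<le> u y \<and> u y \<le> 1"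
    "\<And>y. y \<in> Q \<Longrightarrow> u y = 1" "\<And>y. y \<in> topspace X \<Longrightarrow> y \<notin> Q2 \<Longrightarrow> u y = 0"
proof -
  have reg: "regular_space X" using X compact_Hausdorff_imp_regular_space by blast
  have nor: "normal_space X" using X compact_Hausdorff_or_regular_imp_normal_space by blast
  obtain Q2 where Q2: "openin X Q2" "x \<in> Q2" "X closure_of Q2 \<subseteq> W"
    using reg_shrink[OF reg W] by blast
  obtain Q where Q: "openin X Q" "x \<in> Q" "X closure_of Q \<subseteq> Q2"
    using reg_shrink[OF reg Q2(1,2)] by blast
  have Qcl: "Q \<subseteq> X closure_of Q" by (rule closure_of_subset[OF openin_subset[OF Q(1)]])
  have OO: "Q \<subseteq> Q2" using Qcl Q(3) by (rule subset_trans)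
  have c1: "closedin X (topspace X - Q2)" using Q2(1) by (simp add: closedin_diff)
  have c2: "closedin X (X closure_of Q)" by simp
  have dj: "disjnt (topspace X - Q2) (X closure_of Q)" using Q(3) unfolding disjnt_def by blast
  obtain f where f: "continuous_map X (top_of_set {0..1::real}) f"
    "f ` (topspace X - Q2) \<subseteq> {0}" "f ` (X closure_of Q) \<subseteq> {1}"
    using Urysohn_lemma[OF nor c1 c2 dj zero_le_one] by blast
  show ?thesis
  proof (rule that[OF Q(1,2) Q2(1) OO Q2(3)])
    show "continuous_map X euclideanreal f" using f(1) continuous_map_into_fulltopology by blast
    show "\<And>y. y \<in> topspace X \<Longrightarrow> 0 \<le> f y \<and> f y \<le> 1"
      using f(1) by (auto simp: continuous_map_def)
    show "f y = 1" if "y \<in> Q" for y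
    proof -
      have "y \<in> X closure_of Q" using Qcl that by blast
      then show ?thesis using f(3) by blast
    qed
    show "\<And>y. y \<in> topspace X \<Longrightarrow> y \<notin> Q2 \<Longrightarrow> f y = 0"
      using f(2) by blast
  qed
qed


lemma loc_metr_zero_set:
  assumes X: "compact_space X" "Hausdorff_space X"
    and loc: "\<And>x. x \<in> topspace X \<Longrightarrow> \<exists>U. openin X U \<and> x \<in> U \<and> metrizable_space (subtopology X U)"
    and S: "closedin X S"
  obtains g where "continuous_map X euclideanreal g"
    "\<And>x. x \<in> topspace X \<Longrightarrow> 0 \<le> g x \<and> g x \<le> 1 \<and> (g x = 0 \<longleftrightarrow> x \<in> S)"
proof -
  have ex: "\<exists>U Q Q2 u z. openin X U \<and> openin X Q \<and> x \<in> Q \<and> Q \<subseteq> U \<and> X closure_of Q2 \<subseteq> U \<and>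
      continuous_map X euclideanreal u \<and> (\<forall>y\<in>topspace X. 0 \<le> u y \<and> u y \<le> 1) \<and> (\<forall>y\<in>Q. u y = 1) \<and>
      (\<forall>y\<in>topspace X. y \<notin> Q2 \<longrightarrow> u y = 0) \<and>
      continuous_map (subtopology X U) euclideanreal z \<and> (\<forall>y\<in>U. 0 \<le> z y \<and> (z y = 0 \<longleftrightarrow> y \<in> S))"
    if x: "x \<in> topspace X" for x
  proof -
    obtain U where U: "openin X U" "x \<in> U" "metrizable_space (subtopology X U)" using loc[OF x] by blast
    obtain Q Q2 u where b: "openin X Q" "x \<in> Q" "openin X Q2" "Q \<subseteq> Q2" "X closure_of Q2 \<subseteq> U"
      "continuous_map X euclideanreal u" "\<And>y. y \<in> topspace X \<Longrightarrow> 0 \<le> u y \<and> u y \<le> 1"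
      "\<And>y. y \<in> Q \<Longrightarrow> u y = 1" "\<And>y. y \<in> topspace X \<Longrightarrow> y \<notin> Q2 \<Longrightarrow> u y = 0"
      using bump[OF X U(1,2)] by blast
    have UX: "U \<subseteq> topspace X" using U(1) openin_subset by blast
    have "closedin (subtopology X U) (U \<inter> S)" using S by (rule closedin_subtopology_Int_closed)
    then obtain z where z: "continuous_map (subtopology X U) euclideanreal z"
      "\<And>y. y \<in> topspace (subtopology X U) \<Longrightarrow> z y \<ge> 0"
      "\<And>y. y \<in> topspace (subtopology X U) \<Longrightarrow> z y = 0 \<longleftrightarrow> y \<in> U \<inter> S"
      using metrizable_zero_set[OF U(3)] by blast
    have tU: "topspace (subtopology X U) = U" using UX by auto
    have Q2cl: "Q2 \<subseteq> X closure_of Q2" by (rule closure_of_subset[OF openin_subset[OF b(3)]])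
    have QU: "Q \<subseteq> U" using b(4) Q2cl b(5) by blast
    have z2: "\<forall>y\<in>U. 0 \<le> z y \<and> (z y = 0 \<longleftrightarrow> y \<in> S)"
    proof
      fix y assume "y \<in> U"
      then have "y \<in> topspace (subtopology X U)" using tU by simp
      then show "0 \<le> z y \<and> (z y = 0 \<longleftrightarrow> y \<in> S)" using z(2,3) \<open>y \<in> U\<close> by blast
    qed
    have b7: "\<forall>y\<in>topspace X. 0 \<le> u y \<and> u y \<le> 1" using b(7) by blast
    have b8: "\<forall>y\<in>Q. u y = 1" using b(8) by blast
    have b9: "\<forall>y\<in>topspace X. y \<notin> Q2 \<longrightarrow> u y = 0" using b(9) by blast
    show ?thesis
      apply (rule exI[of _ U], rule exI[of _ Q], rule exI[of _ Q2], rule exI[of _ u], rule exI[of _ z])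
      apply (intro conjI)
      by (fact U(1) b(1) b(2) QU b(5) b(6) b7 b8 b9 z(1) z2)+
  qed
  then obtain U Q Q2 u z where P: "\<And>x. x \<in> topspace X \<Longrightarrow> openin X (U x) \<and> openin X (Q x) \<and> x \<in> Q x \<and> Q x \<subseteq> U x \<and> X closure_of (Q2 x) \<subseteq> U x \<and>
      continuous_map X euclideanreal (u x) \<and> (\<forall>y\<in>topspace X. 0 \<le> u x y \<and> u x y \<le> 1) \<and> (\<forall>y\<in>Q x. u x y = 1) \<and>
      (\<forall>y\<in>topspace X. y \<notin> Q2 x \<longrightarrow> u x y = 0) \<and>
      continuous_map (subtopology X (U x)) euclideanreal (z x) \<and> (\<forall>y\<in>U x. 0 \<le> z x y \<and> (z x y = 0 \<longleftrightarrow> y \<in> S))"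
    by metis
  have PU: "openin X (U x)" if "x \<in> topspace X" for x
    using P[OF that] by (elim conjE) assumption
  have PQ: "openin X (Q x)" if "x \<in> topspace X" for x
    using P[OF that] by (elim conjE) assumption
  have PxQ: "x \<in> Q x" if "x \<in> topspace X" for x
    using P[OF that] by (elim conjE) assumption
  have PQU: "Q x \<subseteq> U x" if "x \<in> topspace X" for x
    using P[OF that] by (elim conjE) assumption
  have Pcl: "X closure_of (Q2 x) \<subseteq> U x" if "x \<in> topspace X" for x
    using P[OF that] by (elim conjE) assumption
  have Pu: "continuous_map X euclideanreal (u x)" if "x \<in> topspace X" for x
    using P[OF that] by (elim conjE) assumption
  have Pu01: "\<forall>y\<in>topspace X. 0 \<le> u x y \<and> u x y \<le> 1" if "x \<in> topspace X" for x
    using P[OF that] by (elim conjE) assumption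
  have Pu1: "\<forall>y\<in>Q x. u x y = 1" if "x \<in> topspace X" for x
    using P[OF that] by (elim conjE) assumption
  have Pu0: "\<forall>y\<in>topspace X. y \<notin> Q2 x \<longrightarrow> u x y = 0" if "x \<in> topspace X" for x
    using P[OF that] by (elim conjE) assumption
  have Pz: "continuous_map (subtopology X (U x)) euclideanreal (z x)" if "x \<in> topspace X" for x
    using P[OF that] by (elim conjE) assumption
  have Pz2: "\<forall>y\<in>U x. 0 \<le> z x y \<and> (z x y = 0 \<longleftrightarrow> y \<in> S)" if "x \<in> topspace X" for x
    using P[OF that] by (elim conjE) assumption

  have "compactin X (topspace X)" using X(1) compact_space_def by blast
  moreover have "\<And>V. V \<in> Q ` topspace X \<Longrightarrow> openin X V" using PQ by blast
  moreover have "topspace X \<subseteq> \<Union> (Q ` topspace X)" using PxQ by blast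
  ultimately obtain \<F> where \<F>: "finite \<F>" "\<F> \<subseteq> Q ` topspace X" "topspace X \<subseteq> \<Union>\<F>"
    using compactinD[of X "topspace X" "Q ` topspace X"] by blast
  then obtain F where F: "finite F" "F \<subseteq> topspace X" "\<F> = Q ` F"
    using finite_subset_image[OF \<F>(1,2)] by blast
  define gg where "gg = (\<lambda>x y. if y \<in> U x then u x y * min 1 (z x y) else 0)"
  have gg_cont: "continuous_map X euclideanreal (gg x)" if x: "x \<in> topspace X" for x
  proof -
    have Px: "openin X (U x)" "X closure_of (Q2 x) \<subseteq> U x" "continuous_map X euclideanreal (u x)"
      "\<forall>y\<in>topspace X. y \<notin> Q2 x \<longrightarrow> u x y = 0" "continuous_map (subtopology X (U x)) euclideanreal (z x)"
      using PU[OF x] Pcl[OF x] Pu[OF x] Pu0[OF x] Pz[OF x] by auto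
    let ?T = "\<lambda>b. if b then U x else topspace X - X closure_of (Q2 x)"
    show ?thesis
    proof (rule pasting_lemma[where I = "UNIV :: bool set" and T = ?T and f = "\<lambda>_. gg x"])
      fix b :: bool
      show "openin X (?T b)" using Px(1) by (cases b) (auto intro: openin_diff)
      show "continuous_map (subtopology X (?T b)) euclideanreal (gg x)"
      proof (cases b)
        case True
        have "continuous_map (subtopology X (U x)) euclideanreal (\<lambda>y. u x y * min 1 (z x y))"
        proof -
          have "continuous_map (subtopology X (U x)) euclideanreal (u x)"
            by (rule continuous_map_from_subtopology[OF Px(3)])
          then show ?thesis using Px(5)
            by (intro continuous_map_real_mult continuous_map_real_min) auto
        qed
        then have "continuous_map (subtopology X (U x)) euclideanreal (gg x)"
          by (rule continuous_map_eq) (auto simp: gg_def)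
        then show ?thesis using True by simp
      next
        case False
        have zz: "\<And>y. y \<in> topspace (subtopology X (topspace X - X closure_of Q2 x)) \<Longrightarrow> 0 = gg x y"
        proof -
          fix y assume "y \<in> topspace (subtopology X (topspace X - X closure_of Q2 x))"
          then have y: "y \<in> topspace X" "y \<notin> X closure_of Q2 x" by auto
          then have "y \<notin> Q2 x" using closure_of_subset[of "Q2 x" X] closure_of_subset_Int[of X "Q2 x"] by blast
          then have "u x y = 0" using Px(4) y by blast
          then show "0 = gg x y" by (simp add: gg_def)
        qed
        have "continuous_map (subtopology X (topspace X - X closure_of Q2 x)) euclideanreal (gg x)"
        proof (rule continuous_map_eq)
          show "continuous_map (subtopology X (topspace X - X closure_of Q2 x)) euclideanreal (\<lambda>_. 0::real)"
            by simp
        qed (use zz in auto)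
        then show ?thesis using False by simp
      qed
    next
      fix y assume y: "y \<in> topspace X"
      show "\<exists>j. j \<in> UNIV \<and> y \<in> ?T j \<and> gg x y = gg x y"
      proof (cases "y \<in> U x")
        case True then show ?thesis by (intro exI[of _ True]) auto
      next
        case False then show ?thesis using y Px(2) by (intro exI[of _ False]) auto
      qed
    qed auto
  qed
  have gg_nonneg: "0 \<le> gg x y" if "x \<in> topspace X" "y \<in> topspace X" for x y
  proof -
    have "0 \<le> u x y" using Pu01[OF that(1)] that(2) by blast
    moreover have "y \<in> U x \<Longrightarrow> 0 \<le> z x y" using Pz2[OF that(1)] by blast
    ultimately show ?thesis by (simp add: gg_def)
  qed
  define g where "g = (\<lambda>y. min 1 (\<Sum>x\<in>F. gg x y))"
  show ?thesis
  proof (rule that[of g])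
    show "continuous_map X euclideanreal g"
      unfolding g_def using F gg_cont by (intro continuous_map_real_min continuous_map_sum) auto
    fix y assume y: "y \<in> topspace X"
    have sn: "0 \<le> (\<Sum>x\<in>F. gg x y)" using gg_nonneg F y by (intro sum_nonneg) auto
    have "g y = 0 \<longleftrightarrow> y \<in> S"
    proof
      assume "y \<in> S"
      have "gg x y = 0" if "x \<in> F" for x
      proof -
        have xt: "x \<in> topspace X" using F that by blast
        have "y \<in> U x \<Longrightarrow> z x y = 0" using Pz2[OF xt] \<open>y \<in> S\<close> by blast
        then show ?thesis by (simp add: gg_def)
      qed
      then show "g y = 0" by (simp add: g_def)
    next
      assume g0: "g y = 0"
      show "y \<in> S"
      proof (rule ccontr)
        assume yS: "y \<notin> S"
        obtain x where x: "x \<in> F" "y \<in> Q x" using \<F> F y by blast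
        have xt: "x \<in> topspace X" using x F by blast
        have yU: "y \<in> U x" using PQU[OF xt] x by blast
        have "u x y = 1" using Pu1[OF xt] x by blast
        moreover have "0 < z x y" using Pz2[OF xt] yU yS by force
        ultimately have pos: "0 < gg x y" using yU by (simp add: gg_def)
        have "gg x y \<le> (\<Sum>x\<in>F. gg x y)"
          using F x gg_nonneg y by (intro member_le_sum) auto
        then have "0 < g y" using pos by (simp add: g_def)
        then show False using g0 by simp
      qed
    qed
    then show "0 \<le> g y \<and> g y \<le> 1 \<and> (g y = 0 \<longleftrightarrow> y \<in> S)"
      using sn by (simp add: g_def)
  qed
qed


lemma proper_from_ext:
  assumes k: "continuous_map Z W k" and Z: "compact_space Z" and W: "Hausdorff_space W"
    and kI: "k ` I \<subseteq> J" and kB: "k ` (topspace Z - I) \<subseteq> topspace W - J"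
  shows "proper_cont (subtopology Z I) (subtopology W J) k"
  unfolding proper_cont_def
proof (intro conjI allI impI)
  show "continuous_map (subtopology Z I) (subtopology W J) k"
  proof -
    have "continuous_map (subtopology Z I) W k" by (simp add: continuous_map_from_subtopology k)
    then show ?thesis using kI by (auto simp: continuous_map_in_subtopology)
  qed
  fix K assume "compactin (subtopology W J) K"
  then have K: "compactin W K" "K \<subseteq> J" by (auto simp: compactin_subtopology)
  then have "closedin W K" using W compactin_imp_closedin by blast
  then have "closedin Z {x \<in> topspace Z. k x \<in> K}"
    using k closedin_continuous_map_preimage by blast
  then have c: "compactin Z {x \<in> topspace Z. k x \<in> K}"
    using Z closedin_compact_space by blast
  have sub: "{x \<in> topspace Z. k x \<in> K} \<subseteq> I" using kB K(2) by blast
  have "{x \<in> topspace (subtopology Z I). k x \<in> K} = {x \<in> topspace Z. k x \<in> K}"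
    using sub by auto
  then show "compactin (subtopology Z I) {x \<in> topspace (subtopology Z I). k x \<in> K}"
    using c sub by (simp add: compactin_subtopology)
qed

lemma homotopic_withE:
  assumes "homotopic_with P X Y f g"
  obtains H where "continuous_map (prod_topology (top_of_set {0..1::real}) X) Y H"
    "\<And>x. H (0, x) = f x" "\<And>x. H (1, x) = g x" "\<And>t. t \<in> {0..1} \<Longrightarrow> P (\<lambda>x. H (t, x))"
  using assms unfolding homotopic_with_def by blast

lemma homotopy_proper:
  assumes hom: "homotopic_with (\<lambda>k. k ` I \<subseteq> J \<and> k ` (topspace Z - I) \<subseteq> topspace W - J) Z W f g"
    and Z: "compact_space Z" and W: "Hausdorff_space W"
  shows "proper_homotopic (subtopology Z I) (subtopology W J) f g"
proof -
  obtain H where H: "continuous_map (prod_topology (top_of_set {0..1::real}) Z) W H"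
    and H0: "\<And>x. H (0, x) = f x" and H1: "\<And>x. H (1, x) = g x"
    and P: "\<And>t. t \<in> {0..1} \<Longrightarrow> (\<lambda>x. H (t, x)) ` I \<subseteq> J \<and> (\<lambda>x. H (t, x)) ` (topspace Z - I) \<subseteq> topspace W - J"
    using homotopic_withE[OF hom] by metis
  have eq: "prod_topology (top_of_set {0..1::real}) (subtopology Z I)
       = subtopology (prod_topology (top_of_set {0..1::real}) Z) ({0..1} \<times> I)"
    by (simp only: prod_topology_subtopology(2)) simp
  have cpt: "compact_space (prod_topology (top_of_set {0..1::real}) Z)"
    using Z by (metis compact_Icc compact_space_prod_topology compactin_euclidean_iff compact_space_subtopology)
  have "proper_cont (subtopology (prod_topology (top_of_set {0..1::real}) Z) ({0..1} \<times> I)) (subtopology W J) H"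
  proof (rule proper_from_ext[OF H cpt W])
    show "H ` ({0..1} \<times> I) \<subseteq> J"
    proof (clarsimp)
      fix t x assume "0 \<le> t" "t \<le> (1::real)" "x \<in> I"
      then show "H (t, x) \<in> J" using P[of t] by (auto simp: image_subset_iff)
    qed
    show "H ` (topspace (prod_topology (top_of_set {0..1}) Z) - {0..1} \<times> I) \<subseteq> topspace W - J"
    proof (rule subsetI)
      fix y assume "y \<in> H ` (topspace (prod_topology (top_of_set {0..1}) Z) - {0..1} \<times> I)"
      then obtain p where p: "p \<in> topspace (prod_topology (top_of_set {0..1}) Z) - {0..1} \<times> I" "y = H p"
        by blast
      obtain t x where tx: "p = (t, x)" by (cases p)
      have y: "y = H (t, x)" and t: "t \<in> {0..1}" and x: "x \<in> topspace Z" "x \<notin> I"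
        using p tx by auto
      then show "y \<in> topspace W - J" using P[OF t] by (auto simp: image_subset_iff)
    qed
  qed
  then show ?thesis
    unfolding proper_homotopic_def eq using H0 H1 by blast
qed

lemma proper_cont_compose:
  assumes "proper_cont X Y f" "proper_cont Y Z g"
  shows "proper_cont X Z (g \<circ> f)"
  unfolding proper_cont_def
proof (intro conjI allI impI)
  show "continuous_map X Z (g \<circ> f)"
    using assms unfolding proper_cont_def by (metis continuous_map_compose)
  fix K assume K: "compactin Z K"
  then have c: "compactin Y {y \<in> topspace Y. g y \<in> K}" using assms(2) unfolding proper_cont_def by simp
  have "\<forall>K. compactin Y K \<longrightarrow> compactin X {x \<in> topspace X. f x \<in> K}"
    using assms(1) unfolding proper_cont_def by (elim conjE)
  then have "compactin X {x \<in> topspace X. f x \<in> {y \<in> topspace Y. g y \<in> K}}"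
    using c by blast
  moreover have "{x \<in> topspace X. f x \<in> {y \<in> topspace Y. g y \<in> K}} = {x \<in> topspace X. (g \<circ> f) x \<in> K}"
    using assms(1) unfolding proper_cont_def continuous_map_def by auto
  ultimately show "compactin X {x \<in> topspace X. (g \<circ> f) x \<in> K}" by simp
qed

lemma homeomorphic_maps_proper:
  assumes "homeomorphic_maps X Y f g"
  shows "proper_cont X Y f"
proof -
  have f: "continuous_map X Y f" and g: "continuous_map Y X g"
    and gf: "\<And>x. x \<in> topspace X \<Longrightarrow> g (f x) = x" and fg: "\<And>y. y \<in> topspace Y \<Longrightarrow> f (g y) = y"
    using assms unfolding homeomorphic_maps_def by auto
  show ?thesis
    unfolding proper_cont_def
  proof (intro conjI allI impI f)
    fix K assume K: "compactin Y K"
    have KY: "K \<subseteq> topspace Y" using K compactin_subset_topspace by auto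
    have "{x \<in> topspace X. f x \<in> K} = g ` K"
    proof
      show "{x \<in> topspace X. f x \<in> K} \<subseteq> g ` K"
      proof
        fix x assume "x \<in> {x \<in> topspace X. f x \<in> K}"
        then have "x = g (f x)" "f x \<in> K" using gf by auto
        then show "x \<in> g ` K" by (metis imageI)
      qed
      show "g ` K \<subseteq> {x \<in> topspace X. f x \<in> K}"
      proof
        fix x assume "x \<in> g ` K"
        then obtain y where y: "y \<in> K" "x = g y" by auto
        then have "y \<in> topspace Y" using KY by auto
        then have "g y \<in> topspace X" "f (g y) = y" using g fg unfolding continuous_map_def by auto
        then show "x \<in> {x \<in> topspace X. f x \<in> K}" using y by simp
      qed
    qed
    moreover have "compactin X (g ` K)"
      using K g image_compactin by blast
    ultimately show "compactin X {x \<in> topspace X. f x \<in> K}" by simp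
  qed
qed

lemma phe_sym:
  assumes "proper_homotopy_equivalent X Y" shows "proper_homotopy_equivalent Y X"
proof -
  obtain f g where "proper_cont X Y f" "proper_cont Y X g" "proper_homotopic X X (g \<circ> f) id" "proper_homotopic Y Y (f \<circ> g) id"
    using assms unfolding proper_homotopy_equivalent_def by auto
  then show ?thesis unfolding proper_homotopy_equivalent_def by auto
qed

lemma phe_homeo_left:
  assumes e: "homeomorphic_maps M S e e'" and phe: "proper_homotopy_equivalent S N"
  shows "proper_homotopy_equivalent M N"
proof -
  obtain f g where f: "proper_cont S N f" and g: "proper_cont N S g"
    and hS: "proper_homotopic S S (g \<circ> f) id" and hN: "proper_homotopic N N (f \<circ> g) id"
    using phe unfolding proper_homotopy_equivalent_def by blast
  have pe: "proper_cont M S e" using e homeomorphic_maps_proper by blast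
  have pe': "proper_cont S M e'" using e homeomorphic_maps_proper homeomorphic_maps_sym by blast
  obtain H where H: "proper_cont (prod_topology (top_of_set {0..1::real}) S) S H"
    and H0: "\<forall>x\<in>topspace S. H (0, x) = (g \<circ> f) x" and H1: "\<forall>x\<in>topspace S. H (1, x) = id x"
    using hS unfolding proper_homotopic_def by blast
  obtain K where K: "proper_cont (prod_topology (top_of_set {0..1::real}) N) N K"
    and K0: "\<forall>x\<in>topspace N. K (0, x) = (f \<circ> g) x" and K1: "\<forall>x\<in>topspace N. K (1, x) = id x"
    using hN unfolding proper_homotopic_def by blast
  have hp: "homeomorphic_maps (prod_topology (top_of_set {0..1::real}) M) (prod_topology (top_of_set {0..1::real}) S)
      (\<lambda>(t,x). (id t, e x)) (\<lambda>(t,x). (id t, e' x))"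
  proof -
    have "homeomorphic_maps (top_of_set {0..1::real}) (top_of_set {0..1::real}) id id"
      by (simp add: homeomorphic_maps_id)
    then show ?thesis using e by (simp add: homeomorphic_maps_prod id_def)
  qed
  then have pp: "proper_cont (prod_topology (top_of_set {0..1::real}) M) (prod_topology (top_of_set {0..1::real}) S)
      (\<lambda>(t,x). (id t, e x))"
    using homeomorphic_maps_proper by blast
  have eS: "\<And>x. x \<in> topspace M \<Longrightarrow> e x \<in> topspace S" "\<And>x. x \<in> topspace M \<Longrightarrow> e' (e x) = x"
    "\<And>y. y \<in> topspace S \<Longrightarrow> e (e' y) = y"
    using e unfolding homeomorphic_maps_def continuous_map_def by auto
  have gN: "\<And>y. y \<in> topspace N \<Longrightarrow> g y \<in> topspace S"
    using g unfolding proper_cont_def continuous_map_def by auto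
  show ?thesis
    unfolding proper_homotopy_equivalent_def
  proof (intro exI conjI)
    show "proper_cont M N (f \<circ> e)" using pe f proper_cont_compose by blast
    show "proper_cont N M (e' \<circ> g)" using pe' g proper_cont_compose by blast
    show "proper_homotopic M M ((e' \<circ> g) \<circ> (f \<circ> e)) id"
      unfolding proper_homotopic_def
    proof (intro exI conjI ballI)
      show "proper_cont (prod_topology (top_of_set {0..1}) M) M (e' \<circ> H \<circ> (\<lambda>(t,x). (id t, e x)))"
        using proper_cont_compose[OF proper_cont_compose[OF pp H] pe'] by (simp add: o_assoc)
      fix x assume x: "x \<in> topspace M"
      show "(e' \<circ> H \<circ> (\<lambda>(t, x). (id t, e x))) (0, x) = ((e' \<circ> g) \<circ> (f \<circ> e)) x"
        using H0 eS x by simp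
      show "(e' \<circ> H \<circ> (\<lambda>(t, x). (id t, e x))) (1, x) = id x"
        using H1 eS x by simp
    qed
    show "proper_homotopic N N ((f \<circ> e) \<circ> (e' \<circ> g)) id"
      unfolding proper_homotopic_def
    proof (intro exI conjI ballI)
      show "proper_cont (prod_topology (top_of_set {0..1}) N) N K" by (fact K)
      fix y assume y: "y \<in> topspace N"
      show "K (0, y) = ((f \<circ> e) \<circ> (e' \<circ> g)) y" using K0 y gN eS by simp
      show "K (1, y) = id y" using K1 y by simp
    qed
  qed
qed

lemma phe_homeo:
  assumes "M homeomorphic_space S" "N homeomorphic_space T" "proper_homotopy_equivalent S T"
  shows "proper_homotopy_equivalent M N"
proof -
  obtain e e' where e: "homeomorphic_maps M S e e'" using assms(1) homeomorphic_space_def by blast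
  obtain k k' where k: "homeomorphic_maps N T k k'" using assms(2) homeomorphic_space_def by blast
  have "proper_homotopy_equivalent M T" using phe_homeo_left[OF e assms(3)] .
  then have "proper_homotopy_equivalent T M" by (rule phe_sym)
  then have "proper_homotopy_equivalent N M" using phe_homeo_left[OF k] by blast
  then show ?thesis by (rule phe_sym)
qed

lemma pair_he_sym:
  "pair_homotopy_equivalent X A Y B \<Longrightarrow> pair_homotopy_equivalent Y B X A"
  unfolding pair_homotopy_equivalent_def by blast

lemma pair_he_trans:
  assumes "pair_homotopy_equivalent X A Y B" "pair_homotopy_equivalent Y B Z C"
  shows "pair_homotopy_equivalent X A Z C"
proof -
  obtain f1 g1 where f1: "pair_map X A Y B f1" and g1: "pair_map Y B X A g1"
    and h1: "homotopic_with (\<lambda>h. h ` A \<subseteq> A) X X (g1 \<circ> f1) id"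
    and k1: "homotopic_with (\<lambda>h. h ` B \<subseteq> B) Y Y (f1 \<circ> g1) id"
    using assms(1) unfolding pair_homotopy_equivalent_def by blast
  obtain f2 g2 where f2: "pair_map Y B Z C f2" and g2: "pair_map Z C Y B g2"
    and h2: "homotopic_with (\<lambda>h. h ` B \<subseteq> B) Y Y (g2 \<circ> f2) id"
    and k2: "homotopic_with (\<lambda>h. h ` C \<subseteq> C) Z Z (f2 \<circ> g2) id"
    using assms(2) unfolding pair_homotopy_equivalent_def by blast
  have a: "homotopic_with (\<lambda>h. h ` A \<subseteq> A) X X (g1 \<circ> ((g2 \<circ> f2) \<circ> f1)) (g1 \<circ> (id \<circ> f1))"
  proof (rule homotopic_with_compose_continuous_map_left)
    show "homotopic_with (\<lambda>h. h ` A \<subseteq> B) X Y ((g2 \<circ> f2) \<circ> f1) (id \<circ> f1)"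
      by (rule homotopic_with_compose_continuous_map_right[OF h2])
         (use f1 in \<open>auto simp: pair_map_def image_comp[symmetric]\<close>)
    show "continuous_map Y X g1" using g1 pair_map_def by blast
    show "\<And>j. j ` A \<subseteq> B \<Longrightarrow> (g1 \<circ> j) ` A \<subseteq> A"
      using g1 unfolding pair_map_def by (auto simp: image_comp[symmetric])
  qed
  have b: "homotopic_with (\<lambda>h. h ` C \<subseteq> C) Z Z (f2 \<circ> ((f1 \<circ> g1) \<circ> g2)) (f2 \<circ> (id \<circ> g2))"
  proof (rule homotopic_with_compose_continuous_map_left)
    show "homotopic_with (\<lambda>h. h ` C \<subseteq> B) Z Y ((f1 \<circ> g1) \<circ> g2) (id \<circ> g2)"
      by (rule homotopic_with_compose_continuous_map_right[OF k1])
         (use g2 in \<open>auto simp: pair_map_def image_comp[symmetric]\<close>)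
    show "continuous_map Y Z f2" using f2 pair_map_def by blast
    show "\<And>j. j ` C \<subseteq> B \<Longrightarrow> (f2 \<circ> j) ` C \<subseteq> C"
      using f2 unfolding pair_map_def by (auto simp: image_comp[symmetric])
  qed
  show ?thesis
    unfolding pair_homotopy_equivalent_def
  proof (intro exI conjI)
    show "pair_map X A Z C (f2 \<circ> f1)"
      using f1 f2 unfolding pair_map_def by (auto intro: continuous_map_compose simp: image_comp[symmetric])
    show "pair_map Z C X A (g1 \<circ> g2)"
      using g1 g2 unfolding pair_map_def by (auto intro: continuous_map_compose simp: image_comp[symmetric])
    show "homotopic_with (\<lambda>h. h ` A \<subseteq> A) X X ((g1 \<circ> g2) \<circ> (f2 \<circ> f1)) id"
      using homotopic_with_trans[OF a] h1 by (simp add: o_assoc)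
    show "homotopic_with (\<lambda>h. h ` C \<subseteq> C) Z Z ((f2 \<circ> f1) \<circ> (g1 \<circ> g2)) id"
      using homotopic_with_trans[OF b] k2 by (simp add: o_assoc)
  qed
qed


lemma cm_push:
  assumes h: "continuous_map (prod_topology (top_of_set {0..1::real}) W) W h"
    and a: "continuous_map Z euclideanreal a" and a01: "\<And>z. z \<in> topspace Z \<Longrightarrow> a z \<in> {0..1}"
    and b: "continuous_map Z W b"
  shows "continuous_map Z W (\<lambda>z. h (a z, b z))"
proof -
  have "continuous_map Z (top_of_set {0..1}) a"
    using a a01 by (auto simp: continuous_map_in_subtopology)
  then have "continuous_map Z (prod_topology (top_of_set {0..1::real}) W) (\<lambda>z. (a z, b z))"
    using b by (intro continuous_map_pairedI)
  then show ?thesis using continuous_map_compose[OF _ h] by (simp add: o_def)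
qed

lemma cm_fst01: "continuous_map (prod_topology (top_of_set {0..1::real}) W) euclideanreal fst"
  using continuous_map_fst continuous_map_into_fulltopology by blast

lemma convex01:
  fixes s a b :: real
  assumes "0 \<le> s" "s \<le> 1" "0 \<le> a" "a \<le> 1" "0 \<le> b" "b \<le> 1"
  shows "0 \<le> (1-s)*a + s*b" "(1-s)*a + s*b \<le> 1"
proof -
  have "0 \<le> (1-s)*a" "0 \<le> s*b" using assms by auto
  then show "0 \<le> (1-s)*a + s*b" by simp
  have "(1-s)*a \<le> (1-s)*1" using assms by (intro mult_left_mono) auto
  moreover have "s*b \<le> s*1" using assms by (intro mult_left_mono) auto
  ultimately show "(1-s)*a + s*b \<le> 1" by simp
qed

lemma convex_pos:
  fixes s a b :: real
  assumes "0 \<le> s" "s \<le> 1" "0 < a" "0 < b"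
  shows "0 < (1-s)*a + s*b"
proof (cases "s < 1")
  case True
  then have "0 < (1-s)*a" "0 \<le> s*b" using assms by auto
  then show ?thesis by simp
next
  case False
  then have "s = 1" using assms by simp
  then show ?thesis using assms by simp
qed

lemma mul01:
  fixes s a :: real
  assumes "0 \<le> s" "s \<le> 1" "0 \<le> a" "a \<le> 1"
  shows "(1-s)*a \<in> {0..1}"
proof -
  have "(1-s)*a \<le> 1*1" using assms by (intro mult_mono) auto
  then show ?thesis using assms by auto
qed

definition good_data :: "'a topology \<Rightarrow> 'a set \<Rightarrow> ('a \<Rightarrow> real) \<Rightarrow> (real \<times> 'a \<Rightarrow> 'a) \<Rightarrow> bool" where
  "good_data W I \<rho> h \<longleftrightarrow> I \<subseteq> topspace W \<and>
     continuous_map W euclideanreal \<rho> \<and> (\<forall>x\<in>topspace W. 0 \<le> \<rho> x \<and> \<rho> x \<le> 1 \<and> (\<rho> x = 0 \<longleftrightarrow> x \<notin> I)) \<and>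
     continuous_map (prod_topology (top_of_set {0..1::real}) W) W h \<and>
     (\<forall>x\<in>topspace W. h (0, x) = x) \<and>
     (\<forall>t x. 0 < t \<longrightarrow> t \<le> 1 \<longrightarrow> x \<in> topspace W \<longrightarrow> h (t, x) \<in> I)"

lemma ext_props:
  assumes d1: "good_data W1 I1 \<rho>1 h1" and d2: "good_data W2 I2 \<rho>2 h2"
    and f: "pair_map W1 (topspace W1 - I1) W2 (topspace W2 - I2) f"
  shows "continuous_map W1 W2 (\<lambda>x. h2 (\<rho>1 x, f x))"
    and "\<And>x. x \<in> I1 \<Longrightarrow> h2 (\<rho>1 x, f x) \<in> I2"
    and "\<And>x. x \<in> topspace W1 - I1 \<Longrightarrow> h2 (\<rho>1 x, f x) \<in> topspace W2 - I2"
    and "\<And>x. x \<in> topspace W1 - I1 \<Longrightarrow> h2 (\<rho>1 x, f x) = f x"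
proof -
  have fc: "continuous_map W1 W2 f" and fB: "f ` (topspace W1 - I1) \<subseteq> topspace W2 - I2"
    using f by (auto simp: pair_map_def)
  have r1: "continuous_map W1 euclideanreal \<rho>1" and r1v: "\<And>x. x \<in> topspace W1 \<Longrightarrow> 0 \<le> \<rho>1 x \<and> \<rho>1 x \<le> 1 \<and> (\<rho>1 x = 0 \<longleftrightarrow> x \<notin> I1)"
    and I1: "I1 \<subseteq> topspace W1"
    using d1 by (auto simp: good_data_def)
  have h2: "continuous_map (prod_topology (top_of_set {0..1::real}) W2) W2 h2"
    and h20: "\<And>x. x \<in> topspace W2 \<Longrightarrow> h2 (0, x) = x"
    and h2I: "\<And>t x. 0 < t \<Longrightarrow> t \<le> 1 \<Longrightarrow> x \<in> topspace W2 \<Longrightarrow> h2 (t, x) \<in> I2"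
    using d2 by (auto simp: good_data_def)
  show "continuous_map W1 W2 (\<lambda>x. h2 (\<rho>1 x, f x))"
    using cm_push[OF h2 r1 _ fc] r1v by auto
  show "h2 (\<rho>1 x, f x) \<in> I2" if "x \<in> I1" for x
  proof -
    have "x \<in> topspace W1" using that I1 by auto
    then have "0 < \<rho>1 x" "\<rho>1 x \<le> 1" "f x \<in> topspace W2" using r1v[of x] that fc
      by (auto simp: continuous_map_def)
    then show ?thesis using h2I by blast
  qed
  show eqB: "h2 (\<rho>1 x, f x) = f x" if "x \<in> topspace W1 - I1" for x
  proof -
    have "\<rho>1 x = 0" using r1v[of x] that by auto
    moreover have "f x \<in> topspace W2" using that fc by (auto simp: continuous_map_def)
    ultimately show ?thesis using h20 by simp
  qed
  show "h2 (\<rho>1 x, f x) \<in> topspace W2 - I2" if "x \<in> topspace W1 - I1" for x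
    using eqB[OF that] fB that by auto
qed

lemma homotopic_withI_top:
  assumes P: "\<And>h k. (\<And>x. x \<in> topspace X \<Longrightarrow> h x = k x) \<Longrightarrow> (P h \<longleftrightarrow> P k)"
    and H: "continuous_map (prod_topology (top_of_set {0..1::real}) X) Y H"
    and H0: "\<And>x. x \<in> topspace X \<Longrightarrow> H (0, x) = p x"
    and H1: "\<And>x. x \<in> topspace X \<Longrightarrow> H (1, x) = q x"
    and Ht: "\<And>t. t \<in> {0..1} \<Longrightarrow> P (\<lambda>x. H (t, x))"
  shows "homotopic_with P X Y p q"
proof -
  have eq: "homotopic_with P X Y p q \<longleftrightarrow>
           (\<exists>h. continuous_map (prod_topology (subtopology euclideanreal {0..1}) X) Y h \<and>
              (\<forall>x \<in> topspace X. h(0,x) = p x) \<and>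
              (\<forall>x \<in> topspace X. h(1,x) = q x) \<and>
              (\<forall>t \<in> {0..1}. P(\<lambda>x. h(t, x))))"
    by (rule homotopic_with) (rule P, blast)
  show ?thesis unfolding eq using H H0 H1 Ht by blast
qed


lemma side:
  fixes W1 :: "'a topology" and W2 :: "'b topology"
  assumes d1: "good_data W1 I1 \<rho>1 h1" and d2: "good_data W2 I2 \<rho>2 h2"
    and f: "pair_map W1 (topspace W1 - I1) W2 (topspace W2 - I2) f"
    and g: "pair_map W2 (topspace W2 - I2) W1 (topspace W1 - I1) g"
    and hgf: "homotopic_with (\<lambda>k. k ` (topspace W1 - I1) \<subseteq> topspace W1 - I1) W1 W1 (g \<circ> f) id"
  shows "homotopic_with (\<lambda>k. k ` I1 \<subseteq> I1 \<and> k ` (topspace W1 - I1) \<subseteq> topspace W1 - I1) W1 W1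
           ((\<lambda>y. h1 (\<rho>2 y, g y)) \<circ> (\<lambda>x. h2 (\<rho>1 x, f x))) id"
proof -
  define B1 where "B1 = topspace W1 - I1"
  define P where "P = (\<lambda>k. k ` I1 \<subseteq> I1 \<and> k ` B1 \<subseteq> B1)"
  define F where "F = (\<lambda>x. h2 (\<rho>1 x, f x))"
  let ?T = "prod_topology (top_of_set {0..1::real}) W1"
  have fc: "continuous_map W1 W2 f" and fB: "f ` (topspace W1 - I1) \<subseteq> topspace W2 - I2"
    using f by (auto simp: pair_map_def)
  have gc: "continuous_map W2 W1 g" and gB: "g ` (topspace W2 - I2) \<subseteq> topspace W1 - I1"
    using g by (auto simp: pair_map_def)
  have r1: "continuous_map W1 euclideanreal \<rho>1" and r1v: "\<And>x. x \<in> topspace W1 \<Longrightarrow> 0 \<le> \<rho>1 x \<and> \<rho>1 x \<le> 1 \<and> (\<rho>1 x = 0 \<longleftrightarrow> x \<notin> I1)"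
    and I1: "I1 \<subseteq> topspace W1"
    and h1: "continuous_map ?T W1 h1"
    and h10: "\<And>x. x \<in> topspace W1 \<Longrightarrow> h1 (0, x) = x"
    and h1I: "\<And>t x. 0 < t \<Longrightarrow> t \<le> 1 \<Longrightarrow> x \<in> topspace W1 \<Longrightarrow> h1 (t, x) \<in> I1"
    using d1 by (auto simp: good_data_def)
  have r2: "continuous_map W2 euclideanreal \<rho>2" and r2v: "\<And>x. x \<in> topspace W2 \<Longrightarrow> 0 \<le> \<rho>2 x \<and> \<rho>2 x \<le> 1 \<and> (\<rho>2 x = 0 \<longleftrightarrow> x \<notin> I2)"
    and h2: "continuous_map (prod_topology (top_of_set {0..1::real}) W2) W2 h2"
    and h20: "\<And>x. x \<in> topspace W2 \<Longrightarrow> h2 (0, x) = x"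
    using d2 by (auto simp: good_data_def)
  have Fc: "continuous_map W1 W2 F" and FI: "\<And>x. x \<in> I1 \<Longrightarrow> F x \<in> I2"
    and FB: "\<And>x. x \<in> topspace W1 - I1 \<Longrightarrow> F x \<in> topspace W2 - I2"
    and FBeq: "\<And>x. x \<in> topspace W1 - I1 \<Longrightarrow> F x = f x"
    using ext_props[OF d1 d2 f] unfolding F_def by auto
  have Ftop: "\<And>x. x \<in> topspace W1 \<Longrightarrow> F x \<in> topspace W2"
    using Fc by (auto simp: continuous_map_def)
  have ftop: "\<And>x. x \<in> topspace W1 \<Longrightarrow> f x \<in> topspace W2"
    using fc by (auto simp: continuous_map_def)
  have gtop: "\<And>x. x \<in> topspace W2 \<Longrightarrow> g x \<in> topspace W1"
    using gc by (auto simp: continuous_map_def)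
  have h1top: "\<And>t x. t \<in> {0..1} \<Longrightarrow> x \<in> topspace W1 \<Longrightarrow> h1 (t, x) \<in> topspace W1"
    using h1 by (auto simp: continuous_map_def)
  have h2top: "\<And>t x. t \<in> {0..1} \<Longrightarrow> x \<in> topspace W2 \<Longrightarrow> h2 (t, x) \<in> topspace W2"
    using h2 by (auto simp: continuous_map_def)
  have Pres: "\<And>h k :: 'a \<Rightarrow> 'a. (\<And>x. x \<in> topspace W1 \<Longrightarrow> h x = k x) \<Longrightarrow> (P h \<longleftrightarrow> P k)"
  proof -
    fix h k :: "'a \<Rightarrow> 'a" assume "\<And>x. x \<in> topspace W1 \<Longrightarrow> h x = k x"
    then have "h ` I1 = k ` I1" "h ` B1 = k ` B1" using I1 unfolding B1_def by (auto intro!: image_cong)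
    then show "P h \<longleftrightarrow> P k" unfolding P_def by simp
  qed
  have Pchk: "P (\<lambda>x. h1 (a x, b x))"
    if a01: "\<And>x. x \<in> topspace W1 \<Longrightarrow> a x \<in> {0..1}"
      and apos: "\<And>x. x \<in> I1 \<Longrightarrow> 0 < a x"
      and a0: "\<And>x. x \<in> B1 \<Longrightarrow> a x = 0"
      and btop: "\<And>x. x \<in> topspace W1 \<Longrightarrow> b x \<in> topspace W1"
      and bB: "\<And>x. x \<in> B1 \<Longrightarrow> b x \<in> B1"
    for a b
    unfolding P_def
  proof (intro conjI subsetI)
    fix y assume "y \<in> (\<lambda>x. h1 (a x, b x)) ` I1"
    then obtain x where x: "x \<in> I1" "y = h1 (a x, b x)" by auto
    then have "x \<in> topspace W1" using I1 by auto
    then show "y \<in> I1" using x h1I[of "a x" "b x"] apos[OF x(1)] a01 btop by auto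
  next
    fix y assume "y \<in> (\<lambda>x. h1 (a x, b x)) ` B1"
    then obtain x where x: "x \<in> B1" "y = h1 (a x, b x)" by auto
    then have "x \<in> topspace W1" unfolding B1_def by auto
    then show "y \<in> B1" using x a0[OF x(1)] h10 btop bB by auto
  qed
  have cfst: "continuous_map ?T euclideanreal fst" by (rule cm_fst01)
  have csnd: "continuous_map ?T W1 snd" by (rule continuous_map_snd)
  have r1T: "continuous_map ?T euclideanreal (\<lambda>p. \<rho>1 (snd p))"
    using continuous_map_compose[OF csnd r1] by (simp add: o_def)
  have FT: "continuous_map ?T W2 (\<lambda>p. F (snd p))"
    using continuous_map_compose[OF csnd Fc] by (simp add: o_def)
  have r2FT: "continuous_map ?T euclideanreal (\<lambda>p. \<rho>2 (F (snd p)))"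
    using continuous_map_compose[OF FT r2] by (simp add: o_def)
  have gFT: "continuous_map ?T W1 (\<lambda>p. g (F (snd p)))"
    using continuous_map_compose[OF FT gc] by (simp add: o_def)
  have fT: "continuous_map ?T W2 (\<lambda>p. f (snd p))"
    using continuous_map_compose[OF csnd fc] by (simp add: o_def)
  have topT: "\<And>p. p \<in> topspace ?T \<Longrightarrow> fst p \<in> {0..1} \<and> snd p \<in> topspace W1"
    by auto
  have xB: "\<And>x. x \<in> B1 \<Longrightarrow> x \<in> topspace W1 \<and> x \<notin> I1" unfolding B1_def by auto
  have xI: "\<And>x. x \<in> I1 \<Longrightarrow> x \<in> topspace W1" using I1 by auto
  have ph1: "homotopic_with P W1 W1 ((\<lambda>y. h1 (\<rho>2 y, g y)) \<circ> F) (\<lambda>x. h1 (\<rho>1 x, g (F x)))"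
  proof (rule homotopic_withI_top[OF Pres])
    let ?a = "\<lambda>p. (1 - fst p) * \<rho>2 (F (snd p)) + fst p * \<rho>1 (snd p)"
    show "continuous_map ?T W1 (\<lambda>p. h1 (?a p, g (F (snd p))))"
    proof (rule cm_push[OF h1 _ _ gFT])
      show "continuous_map ?T euclideanreal ?a"
        by (intro continuous_map_add continuous_map_real_mult continuous_map_diff cfst r1T r2FT) simp
      show "?a p \<in> {0..1}" if "p \<in> topspace ?T" for p
        using convex01[of "fst p" "\<rho>2 (F (snd p))" "\<rho>1 (snd p)"] topT[OF that] r1v r2v Ftop by auto
    qed
    show "\<And>x. x \<in> topspace W1 \<Longrightarrow> h1 (?a (0, x), g (F (snd (0, x)))) = ((\<lambda>y. h1 (\<rho>2 y, g y)) \<circ> F) x"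
      by simp
    show "\<And>x. x \<in> topspace W1 \<Longrightarrow> h1 (?a (1, x), g (F (snd (1, x)))) = h1 (\<rho>1 x, g (F x))"
      by simp
    fix t :: real assume t: "t \<in> {0..1}"
    show "P (\<lambda>x. h1 (?a (t, x), g (F (snd (t, x)))))"
    proof (rule Pchk)
      show "?a (t, x) \<in> {0..1}" if "x \<in> topspace W1" for x
        using convex01[of t "\<rho>2 (F x)" "\<rho>1 x"] t that r1v r2v Ftop by auto
      show "0 < ?a (t, x)" if "x \<in> I1" for x
        using convex_pos[of t "\<rho>2 (F x)" "\<rho>1 x"] t that r1v[of x] r2v[of "F x"] Ftop[of x] FI[of x] xI[of x]
        by auto
      show "?a (t, x) = 0" if "x \<in> B1" for x
        using that xB[OF that] r1v[of x] r2v[of "F x"] FB[of x] by auto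
      show "g (F (snd (t, x))) \<in> topspace W1" if "x \<in> topspace W1" for x
        using that Ftop gtop by auto
      show "g (F (snd (t, x))) \<in> B1" if "x \<in> B1" for x
        using that xB[OF that] FB[of x] gB unfolding B1_def by auto
    qed
  qed
  have ph2: "homotopic_with P W1 W1 (\<lambda>x. h1 (\<rho>1 x, g (F x))) (\<lambda>x. h1 (\<rho>1 x, g (f x)))"
  proof (rule homotopic_withI_top[OF Pres])
    let ?b = "\<lambda>p. g (h2 ((1 - fst p) * \<rho>1 (snd p), f (snd p)))"
    have cb: "continuous_map ?T W1 ?b"
    proof -
      have "continuous_map ?T W2 (\<lambda>p. h2 ((1 - fst p) * \<rho>1 (snd p), f (snd p)))"
      proof (rule cm_push[OF h2 _ _ fT])
        show "continuous_map ?T euclideanreal (\<lambda>p. (1 - fst p) * \<rho>1 (snd p))"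
          by (intro continuous_map_real_mult continuous_map_diff cfst r1T) simp
        show "(1 - fst p) * \<rho>1 (snd p) \<in> {0..1}" if "p \<in> topspace ?T" for p
          using mul01[of "fst p" "\<rho>1 (snd p)"] topT[OF that] r1v by auto
      qed
      then show ?thesis using continuous_map_compose[OF _ gc] by (simp add: o_def)
    qed
    show "continuous_map ?T W1 (\<lambda>p. h1 (\<rho>1 (snd p), ?b p))"
      by (rule cm_push[OF h1 r1T _ cb]) (use topT r1v in auto)
    show "\<And>x. x \<in> topspace W1 \<Longrightarrow> h1 (\<rho>1 (snd (0, x)), ?b (0, x)) = h1 (\<rho>1 x, g (F x))"
      by (simp add: F_def)
    show "\<And>x. x \<in> topspace W1 \<Longrightarrow> h1 (\<rho>1 (snd (1, x)), ?b (1, x)) = h1 (\<rho>1 x, g (f x))"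
      using h20 ftop by simp
    fix t :: real assume t: "t \<in> {0..1}"
    show "P (\<lambda>x. h1 (\<rho>1 (snd (t, x)), ?b (t, x)))"
    proof (rule Pchk)
      show "\<rho>1 (snd (t, x)) \<in> {0..1}" if "x \<in> topspace W1" for x
        using that r1v by auto
      show "0 < \<rho>1 (snd (t, x))" if "x \<in> I1" for x
        using that r1v[of x] xI[of x] by auto
      show "\<rho>1 (snd (t, x)) = 0" if "x \<in> B1" for x
        using that xB[OF that] r1v[of x] by auto
      show "?b (t, x) \<in> topspace W1" if "x \<in> topspace W1" for x
        using that mul01[of t "\<rho>1 x"] t r1v[of x] h2top ftop gtop by auto
      show "?b (t, x) \<in> B1" if "x \<in> B1" for x
      proof -
        have "\<rho>1 x = 0" using xB[OF that] r1v[of x] by auto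
        then have "?b (t, x) = g (f x)" using h20 ftop xB[OF that] by simp
        then show ?thesis using that fB gB unfolding B1_def by auto
      qed
    qed
  qed
  obtain K where K: "continuous_map ?T W1 K" and K0: "\<And>x. K (0, x) = (g \<circ> f) x"
    and K1: "\<And>x. K (1, x) = id x" and KB: "\<And>t. t \<in> {0..1} \<Longrightarrow> (\<lambda>x. K (t, x)) ` (topspace W1 - I1) \<subseteq> topspace W1 - I1"
    using homotopic_withE[OF hgf] by metis
  have ph3: "homotopic_with P W1 W1 (\<lambda>x. h1 (\<rho>1 x, g (f x))) (\<lambda>x. h1 (\<rho>1 x, x))"
  proof (rule homotopic_withI_top[OF Pres])
    show "continuous_map ?T W1 (\<lambda>p. h1 (\<rho>1 (snd p), K p))"
      by (rule cm_push[OF h1 r1T _ K]) (use topT r1v in auto)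
    show "\<And>x. x \<in> topspace W1 \<Longrightarrow> h1 (\<rho>1 (snd (0, x)), K (0, x)) = h1 (\<rho>1 x, g (f x))"
      using K0 by simp
    show "\<And>x. x \<in> topspace W1 \<Longrightarrow> h1 (\<rho>1 (snd (1, x)), K (1, x)) = h1 (\<rho>1 x, x)"
      using K1 by simp
    fix t :: real assume t: "t \<in> {0..1}"
    show "P (\<lambda>x. h1 (\<rho>1 (snd (t, x)), K (t, x)))"
    proof (rule Pchk)
      show "\<rho>1 (snd (t, x)) \<in> {0..1}" if "x \<in> topspace W1" for x
        using that r1v by auto
      show "0 < \<rho>1 (snd (t, x))" if "x \<in> I1" for x
        using that r1v[of x] xI[of x] by auto
      show "\<rho>1 (snd (t, x)) = 0" if "x \<in> B1" for x
        using that xB[OF that] r1v[of x] by auto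
      show "K (t, x) \<in> topspace W1" if "x \<in> topspace W1" for x
        using that t K by (auto simp: continuous_map_def)
      show "K (t, x) \<in> B1" if "x \<in> B1" for x
        using that KB[OF t] unfolding B1_def by auto
    qed
  qed
  have ph4: "homotopic_with P W1 W1 (\<lambda>x. h1 (\<rho>1 x, x)) id"
  proof (rule homotopic_withI_top[OF Pres])
    show "continuous_map ?T W1 (\<lambda>p. h1 ((1 - fst p) * \<rho>1 (snd p), snd p))"
    proof (rule cm_push[OF h1 _ _ csnd])
      show "continuous_map ?T euclideanreal (\<lambda>p. (1 - fst p) * \<rho>1 (snd p))"
        by (intro continuous_map_real_mult continuous_map_diff cfst r1T) simp
      show "(1 - fst p) * \<rho>1 (snd p) \<in> {0..1}" if "p \<in> topspace ?T" for p
        using mul01[of "fst p" "\<rho>1 (snd p)"] topT[OF that] r1v by auto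
    qed
    show "\<And>x. x \<in> topspace W1 \<Longrightarrow> h1 ((1 - fst (0::real, x)) * \<rho>1 (snd (0::real, x)), snd (0::real, x)) = h1 (\<rho>1 x, x)"
      by simp
    show "\<And>x. x \<in> topspace W1 \<Longrightarrow> h1 ((1 - fst (1::real, x)) * \<rho>1 (snd (1::real, x)), snd (1::real, x)) = id x"
      using h10 by simp
    fix t :: real assume t: "t \<in> {0..1}"
    show "P (\<lambda>x. h1 ((1 - fst (t, x)) * \<rho>1 (snd (t, x)), snd (t, x)))"
      unfolding P_def
    proof (intro conjI subsetI)
      fix y assume "y \<in> (\<lambda>x. h1 ((1 - fst (t, x)) * \<rho>1 (snd (t, x)), snd (t, x))) ` I1"
      then obtain x where x: "x \<in> I1" "y = h1 ((1 - t) * \<rho>1 x, x)" by auto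
      have xt: "x \<in> topspace W1" using xI[OF x(1)] .
      have m: "(1 - t) * \<rho>1 x \<in> {0..1}" using mul01[of t "\<rho>1 x"] t r1v[OF xt] by auto
      show "y \<in> I1"
      proof (cases "(1 - t) * \<rho>1 x = 0")
        case True
        from x(2) have "y = h1 (0, x)" by (simp only: True)
        then show ?thesis using h10[OF xt] x(1) by simp
      next
        case False
        then have "0 < (1 - t) * \<rho>1 x" "(1 - t) * \<rho>1 x \<le> 1" using m unfolding atLeastAtMost_iff by linarith+
        then show ?thesis using x(2) h1I[OF _ _ xt] by blast
      qed
    next
      fix y assume "y \<in> (\<lambda>x. h1 ((1 - fst (t, x)) * \<rho>1 (snd (t, x)), snd (t, x))) ` B1"
      then obtain x where x: "x \<in> B1" "y = h1 ((1 - t) * \<rho>1 x, x)" by auto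
      then have "\<rho>1 x = 0" using xB[OF x(1)] r1v[of x] by auto
      then show "y \<in> B1" using x h10 xB[OF x(1)] by simp
    qed
  qed
  have "homotopic_with P W1 W1 ((\<lambda>y. h1 (\<rho>2 y, g y)) \<circ> F) id"
    using homotopic_with_trans[OF ph1 homotopic_with_trans[OF ph2 homotopic_with_trans[OF ph3 ph4]]] .
  then show ?thesis unfolding P_def B1_def F_def .
qed


lemma main_C:
  assumes d1: "good_data W1 I1 \<rho>1 h1" and d2: "good_data W2 I2 \<rho>2 h2"
    and c1: "compact_space W1" and c2: "compact_space W2"
    and H1: "Hausdorff_space W1" and H2: "Hausdorff_space W2"
    and phe: "pair_homotopy_equivalent W1 (topspace W1 - I1) W2 (topspace W2 - I2)"
  shows "proper_homotopy_equivalent (subtopology W1 I1) (subtopology W2 I2)"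
proof -
  obtain f g where f: "pair_map W1 (topspace W1 - I1) W2 (topspace W2 - I2) f"
    and g: "pair_map W2 (topspace W2 - I2) W1 (topspace W1 - I1) g"
    and hgf: "homotopic_with (\<lambda>h. h ` (topspace W1 - I1) \<subseteq> topspace W1 - I1) W1 W1 (g \<circ> f) id"
    and hfg: "homotopic_with (\<lambda>h. h ` (topspace W2 - I2) \<subseteq> topspace W2 - I2) W2 W2 (f \<circ> g) id"
    using phe unfolding pair_homotopy_equivalent_def by blast
  define F where "F = (\<lambda>x. h2 (\<rho>1 x, f x))"
  define G where "G = (\<lambda>y. h1 (\<rho>2 y, g y))"
  have pF: "proper_cont (subtopology W1 I1) (subtopology W2 I2) F"
  proof (rule proper_from_ext[OF _ c1 H2])
    show "continuous_map W1 W2 F" using ext_props(1)[OF d1 d2 f] unfolding F_def .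
    show "F ` I1 \<subseteq> I2" using ext_props(2)[OF d1 d2 f] unfolding F_def by blast
    show "F ` (topspace W1 - I1) \<subseteq> topspace W2 - I2" using ext_props(3)[OF d1 d2 f] unfolding F_def by blast
  qed
  have pG: "proper_cont (subtopology W2 I2) (subtopology W1 I1) G"
  proof (rule proper_from_ext[OF _ c2 H1])
    show "continuous_map W2 W1 G" using ext_props(1)[OF d2 d1 g] unfolding G_def .
    show "G ` I2 \<subseteq> I1" using ext_props(2)[OF d2 d1 g] unfolding G_def by blast
    show "G ` (topspace W2 - I2) \<subseteq> topspace W1 - I1" using ext_props(3)[OF d2 d1 g] unfolding G_def by blast
  qed
  have "homotopic_with (\<lambda>k. k ` I1 \<subseteq> I1 \<and> k ` (topspace W1 - I1) \<subseteq> topspace W1 - I1) W1 W1 (G \<circ> F) id"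
    using side[OF d1 d2 f g hgf] unfolding F_def G_def .
  then have hGF: "proper_homotopic (subtopology W1 I1) (subtopology W1 I1) (G \<circ> F) id"
    using homotopy_proper c1 H1 by blast
  have "homotopic_with (\<lambda>k. k ` I2 \<subseteq> I2 \<and> k ` (topspace W2 - I2) \<subseteq> topspace W2 - I2) W2 W2 (F \<circ> G) id"
    using side[OF d2 d1 g f hfg] unfolding F_def G_def .
  then have hFG: "proper_homotopic (subtopology W2 I2) (subtopology W2 I2) (F \<circ> G) id"
    using homotopy_proper c2 H2 by blast
  show ?thesis unfolding proper_homotopy_equivalent_def using pF pG hGF hFG by blast
qed


lemma interior_open: "openin W (manifold_interior W)"
proof -
  have "\<exists>T. openin W T \<and> x \<in> T \<and> T \<subseteq> manifold_interior W" if x: "x \<in> manifold_interior W" for x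
  proof -
    obtain n U V where U: "openin W U" "x \<in> U" "openin (Euclidean_space n) V"
      "subtopology W U homeomorphic_space subtopology (Euclidean_space n) V"
      using x unfolding manifold_interior_def by blast
    have "U \<subseteq> manifold_interior W"
    proof
      fix y assume "y \<in> U"
      then have "y \<in> topspace W" using U(1) openin_subset by blast
      then show "y \<in> manifold_interior W"
        unfolding manifold_interior_def using U \<open>y \<in> U\<close> by blast
    qed
    then show ?thesis using U by blast
  qed
  then show ?thesis by (subst openin_subopen) blast
qed

lemma half_space_eq: "half_space n = subtopology (Euclidean_space n) {x. n = 0 \<or> x 0 \<ge> 0}"
  by (simp add: half_space_def)

lemma loc_metr:
  assumes "manifold_with_boundary_dim n W" "x \<in> topspace W"
  shows "\<exists>U. openin W U \<and> x \<in> U \<and> metrizable_space (subtopology W U)"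
proof -
  obtain U V where UV: "openin W U" "x \<in> U" "openin (half_space n) V"
    "subtopology W U homeomorphic_space subtopology (half_space n) V"
    using assms unfolding manifold_with_boundary_dim_def by blast
  have "metrizable_space (subtopology (half_space n) V)"
    unfolding half_space_eq
    by (intro metrizable_space_subtopology metrizable_Euclidean_space)
  then have "metrizable_space (subtopology W U)"
    using homeomorphic_metrizable_space[OF UV(4)] by blast
  then show ?thesis using UV by blast
qed

lemma cm_shift:
  assumes n: "n \<noteq> 0" and a: "continuous_map Z (Euclidean_space n) a" and s: "continuous_map Z euclideanreal s"
  shows "continuous_map Z (Euclidean_space n) (\<lambda>p i. a p i + (if i = 0 then s p else 0))"
proof -
  have a1: "continuous_map Z (powertop_real UNIV) a" and a2: "\<And>p. p \<in> topspace Z \<Longrightarrow> \<forall>i\<ge>n. a p i = 0"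
    using a unfolding Euclidean_space_def continuous_map_in_subtopology by auto
  have ak: "continuous_map Z euclideanreal (\<lambda>p. a p k)" for k
    using a1 unfolding continuous_map_componentwise_UNIV by blast
  have "continuous_map Z euclideanreal (\<lambda>p. a p k + (if k = 0 then s p else 0))" for k
    by (cases "k = 0") (auto intro: continuous_map_add ak s)
  then have "continuous_map Z (powertop_real UNIV) (\<lambda>p i. a p i + (if i = 0 then s p else 0))"
    unfolding continuous_map_componentwise_UNIV by blast
  moreover have "\<forall>i\<ge>n. a p i + (if i = 0 then s p else 0) = 0" if "p \<in> topspace Z" for p
    using a2[OF that] n by auto
  ultimately show ?thesis
    unfolding Euclidean_space_def continuous_map_in_subtopology by auto
qed

lemma interior_pt:
  assumes n: "n \<noteq> 0" and U: "openin W U"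
    and hm: "homeomorphic_maps (subtopology W U) (subtopology (half_space n) V) \<psi> \<psi>'"
    and V: "openin (half_space n) V" and z: "z \<in> V" "z 0 > 0"
  shows "\<psi>' z \<in> manifold_interior W"
proof -
  define H where "H = {x::nat\<Rightarrow>real. n = 0 \<or> x 0 \<ge> 0}"
  have hs: "half_space n = subtopology (Euclidean_space n) H" by (simp add: half_space_def H_def)
  obtain G where G: "openin (Euclidean_space n) G" "V = G \<inter> H"
    using V unfolding hs openin_subtopology by blast
  define P0 where "P0 = {x \<in> topspace (Euclidean_space n). x 0 \<in> {0<..}}"
  have "continuous_map (Euclidean_space n) euclideanreal (\<lambda>x. x 0)"
    unfolding Euclidean_space_def
    by (rule continuous_map_from_subtopology)
       (use continuous_map_product_projection[of 0 UNIV "\<lambda>_. euclideanreal"] in simp)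
  then have P0o: "openin (Euclidean_space n) P0"
    unfolding P0_def by (rule openin_continuous_map_preimage) simp
  define V0 where "V0 = G \<inter> P0"
  have V0o: "openin (Euclidean_space n) V0" unfolding V0_def using G(1) P0o by blast
  have V0V: "V0 \<subseteq> V" unfolding V0_def P0_def G(2) H_def by auto
  have V0H: "V0 \<subseteq> H" using V0V G(2) by blast
  have zE: "z \<in> topspace (Euclidean_space n)" using z(1) G openin_subset by blast
  have zV0: "z \<in> V0" unfolding V0_def P0_def using z G zE by auto
  have psi: "continuous_map (subtopology W U) (subtopology (half_space n) V) \<psi>"
    and psi': "continuous_map (subtopology (half_space n) V) (subtopology W U) \<psi>'"
    and inv1: "\<And>y. y \<in> topspace (subtopology W U) \<Longrightarrow> \<psi>' (\<psi> y) = y"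
    and inv2: "\<And>v. v \<in> topspace (subtopology (half_space n) V) \<Longrightarrow> \<psi> (\<psi>' v) = v"
    using hm unfolding homeomorphic_maps_def by auto
  have "openin (half_space n) (V0 \<inter> H)" unfolding hs by (rule openin_subtopology_Int[OF V0o])
  then have "openin (half_space n) V0" using V0H by (simp add: Int_absorb2)
  then have "openin (subtopology (half_space n) V) (V0 \<inter> V)" by (rule openin_subtopology_Int)
  then have V0sub: "openin (subtopology (half_space n) V) V0" using V0V by (simp add: Int_absorb2)
  define U0 where "U0 = {y \<in> topspace (subtopology W U). \<psi> y \<in> V0}"
  have "openin (subtopology W U) U0"
    unfolding U0_def by (rule openin_continuous_map_preimage[OF psi V0sub])
  then have U0o: "openin W U0" using U openin_trans_full by blast
  have U0U: "U0 \<subseteq> U" unfolding U0_def by auto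
  have tV: "topspace (subtopology (half_space n) V) = topspace (Euclidean_space n) \<inter> H \<inter> V"
    unfolding hs by auto
  have img: "\<psi> ` (topspace (subtopology W U) \<inter> U0) = topspace (subtopology (half_space n) V) \<inter> V0"
  proof
    show "\<psi> ` (topspace (subtopology W U) \<inter> U0) \<subseteq> topspace (subtopology (half_space n) V) \<inter> V0"
      using psi unfolding U0_def continuous_map_def by auto
    show "topspace (subtopology (half_space n) V) \<inter> V0 \<subseteq> \<psi> ` (topspace (subtopology W U) \<inter> U0)"
    proof
      fix v assume v: "v \<in> topspace (subtopology (half_space n) V) \<inter> V0"
      then have "\<psi>' v \<in> topspace (subtopology W U)" using psi' unfolding continuous_map_def by auto
      moreover have "\<psi> (\<psi>' v) = v" using inv2 v by blast
      ultimately show "v \<in> \<psi> ` (topspace (subtopology W U) \<inter> U0)"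
        using v unfolding U0_def by (metis (mono_tags, lifting) IntD2 IntI image_eqI mem_Collect_eq)
    qed
  qed
  have hm0: "homeomorphic_maps (subtopology (subtopology W U) U0) (subtopology (subtopology (half_space n) V) V0) \<psi> \<psi>'"
    by (rule homeomorphic_maps_subtopologies[OF hm img])
  have e1: "subtopology (subtopology W U) U0 = subtopology W U0"
    using U0U by (simp add: subtopology_subtopology Int_absorb1)
  have e2: "subtopology (subtopology (half_space n) V) V0 = subtopology (Euclidean_space n) V0"
    unfolding hs subtopology_subtopology using V0V V0H by (metis Int_absorb1 inf.absorb_iff2 le_inf_iff)
  have hom: "subtopology W U0 homeomorphic_space subtopology (Euclidean_space n) V0"
    using hm0 unfolding e1 e2 homeomorphic_space_def by blast
  have zt: "z \<in> topspace (subtopology (half_space n) V)" using tV zE z(1) G(2) by blast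
  then have pz: "\<psi>' z \<in> topspace (subtopology W U)" using psi' unfolding continuous_map_def by auto
  have "\<psi> (\<psi>' z) = z" using inv2 zt by blast
  then have pzU0: "\<psi>' z \<in> U0" unfolding U0_def using pz zV0 by simp
  have "\<psi>' z \<in> topspace W" using pz by simp
  then show ?thesis
    unfolding manifold_interior_def using U0o pzU0 V0o hom by blast
qed


definition sh :: "(nat \<Rightarrow> real) \<Rightarrow> real \<Rightarrow> nat \<Rightarrow> real" where
  "sh z s = (\<lambda>i. z i + (if i = 0 then s else 0))"

lemma sh0 [simp]: "sh z 0 = z" by (simp add: sh_def)
lemma sh_at0 [simp]: "sh z s 0 = z 0 + s" by (simp add: sh_def)

lemma eps_push:
  assumes n: "n \<noteq> 0" and V: "openin (half_space n) V" and C: "compactin (Euclidean_space n) C" "C \<subseteq> V"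
  obtains \<epsilon> where "\<epsilon> > 0" "\<And>z s. z \<in> C \<Longrightarrow> 0 \<le> s \<Longrightarrow> s \<le> \<epsilon> \<Longrightarrow> sh z s \<in> V"
proof -
  define H where "H = {x::nat\<Rightarrow>real. n = 0 \<or> x 0 \<ge> 0}"
  have hs: "half_space n = subtopology (Euclidean_space n) H" by (simp add: half_space_def H_def)
  obtain G where G: "openin (Euclidean_space n) G" "V = G \<inter> H"
    using V unfolding hs openin_subtopology by blast
  let ?P = "prod_topology euclideanreal (Euclidean_space n)"
  have cP: "continuous_map ?P (Euclidean_space n) (\<lambda>p i. snd p i + (if i = 0 then fst p else 0))"
    by (rule cm_shift[OF n continuous_map_snd continuous_map_fst])
  have shP: "(\<lambda>p i. snd p i + (if i = 0 then fst p else 0)) = (\<lambda>p. sh (snd p) (fst p))"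
    by (auto simp: sh_def)
  have cP': "continuous_map ?P (Euclidean_space n) (\<lambda>p. sh (snd p) (fst p))"
    using cP unfolding shP .
  have Qo: "openin ?P {p \<in> topspace ?P. sh (snd p) (fst p) \<in> G}"
    by (rule openin_continuous_map_preimage[OF cP' G(1)])
  have CE: "C \<subseteq> topspace (Euclidean_space n)" using C(1) compactin_subset_topspace by blast
  have sub: "{0} \<times> C \<subseteq> {p \<in> topspace ?P. sh (snd p) (fst p) \<in> G}"
  proof (rule subsetI)
    fix p :: "real \<times> (nat \<Rightarrow> real)" assume "p \<in> {0} \<times> C"
    then obtain z where p: "p = (0, z)" "z \<in> C" by blast
    then have "z \<in> topspace (Euclidean_space n)" "z \<in> G" using CE C(2) G(2) by blast+
    then show "p \<in> {p \<in> topspace ?P. sh (snd p) (fst p) \<in> G}" using p by simp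
  qed
  have z0: "(0::real) \<in> topspace euclideanreal" by simp
  obtain U' V' where UV: "openin euclideanreal U'" "openin (Euclidean_space n) V'" "0 \<in> U'" "C \<subseteq> V'"
    "U' \<times> V' \<subseteq> {p \<in> topspace ?P. sh (snd p) (fst p) \<in> G}"
    using tube_lemma_right[OF Qo C(1) z0 sub] by blast
  have "open U'" using UV(1) by (metis open_openin)
  then have "\<exists>e>0. ball 0 e \<subseteq> U'" using open_contains_ball_eq[of U' 0] UV(3) by blast
  then obtain e where e: "e > 0" "ball 0 e \<subseteq> U'" by blast
  show ?thesis
  proof (rule that[of "e/2"])
    show "e/2 > 0" using e by simp
    fix z s assume z: "z \<in> C" and s: "0 \<le> s" "s \<le> e/2"
    have "s \<in> ball 0 e" using s e by (simp add: dist_real_def)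
    then have "s \<in> U'" using e(2) by (rule subsetD[rotated])
    moreover have "z \<in> V'" using UV(4) z by (rule subsetD)
    ultimately have "(s, z) \<in> U' \<times> V'" by (rule SigmaI)
    then have "(s, z) \<in> {p \<in> topspace ?P. sh (snd p) (fst p) \<in> G}" using UV(5) by (rule subsetD[rotated])
    then have "sh z s \<in> G" by simp
    moreover have "z \<in> H" using z C(2) G(2) by blast
    then have "sh z s \<in> H" using s n unfolding H_def by simp
    ultimately show "sh z s \<in> V" using G(2) by blast
  qed
qed


lemma local_push:
  assumes M: "manifold_with_boundary_dim n W" and c: "compact_space W" and n: "n \<noteq> 0"
    and x: "x \<in> topspace W"
  obtains Q p where "openin W Q" "x \<in> Q"
    "continuous_map (prod_topology (top_of_set {0..1::real}) W) W p"
    "\<And>y. y \<in> topspace W \<Longrightarrow> p (0, y) = y"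
    "\<And>t y. 0 < t \<Longrightarrow> t \<le> 1 \<Longrightarrow> y \<in> Q \<Longrightarrow> p (t, y) \<in> manifold_interior W"
    "\<And>t y. 0 \<le> t \<Longrightarrow> t \<le> 1 \<Longrightarrow> y \<in> topspace W \<Longrightarrow> p (t, y) = y \<or> p (t, y) \<in> manifold_interior W"
proof -
  have Hs: "Hausdorff_space W" using M unfolding manifold_with_boundary_dim_def by blast
  obtain U V where UV: "openin W U" "x \<in> U" "openin (half_space n) V"
    "subtopology W U homeomorphic_space subtopology (half_space n) V"
    using M x unfolding manifold_with_boundary_dim_def by blast
  obtain \<psi> \<psi>' where hm: "homeomorphic_maps (subtopology W U) (subtopology (half_space n) V) \<psi> \<psi>'"
    using UV(4) homeomorphic_space_def by blast
  have psi: "continuous_map (subtopology W U) (subtopology (half_space n) V) \<psi>"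
    and psi': "continuous_map (subtopology (half_space n) V) (subtopology W U) \<psi>'"
    and inv1: "\<And>y. y \<in> topspace (subtopology W U) \<Longrightarrow> \<psi>' (\<psi> y) = y"
    using hm unfolding homeomorphic_maps_def by auto
  define H where "H = {x::nat\<Rightarrow>real. n = 0 \<or> x 0 \<ge> 0}"
  have hs: "half_space n = subtopology (Euclidean_space n) H" by (simp add: half_space_def H_def)
  have shV: "subtopology (half_space n) V = subtopology (Euclidean_space n) (H \<inter> V)"
    unfolding hs subtopology_subtopology ..
  have UW: "U \<subseteq> topspace W" using UV(1) openin_subset by blast
  have tU: "topspace (subtopology W U) = U" using UW by auto
  have VH: "V \<subseteq> topspace (Euclidean_space n) \<inter> H"
    using openin_subset[OF UV(3)] unfolding hs by simp
  have tV: "topspace (subtopology (half_space n) V) = V" using VH unfolding shV by auto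
  have psiV: "\<And>y. y \<in> U \<Longrightarrow> \<psi> y \<in> V" using psi tU tV unfolding continuous_map_def by auto
  obtain Q Q2 u where b: "openin W Q" "x \<in> Q" "openin W Q2" "Q \<subseteq> Q2" "W closure_of Q2 \<subseteq> U"
    "continuous_map W euclideanreal u" "\<And>y. y \<in> topspace W \<Longrightarrow> 0 \<le> u y \<and> u y \<le> 1"
    "\<And>y. y \<in> Q \<Longrightarrow> u y = 1" "\<And>y. y \<in> topspace W \<Longrightarrow> y \<notin> Q2 \<Longrightarrow> u y = 0"
    using bump[OF c Hs UV(1,2)] by blast
  define K where "K = W closure_of Q2"
  have Q2K: "Q2 \<subseteq> K" unfolding K_def by (rule closure_of_subset[OF openin_subset[OF b(3)]])
  have KU: "K \<subseteq> U" unfolding K_def by (rule b(5))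
  have QU: "Q \<subseteq> U" using b(4) Q2K KU by blast
  have Kc: "compactin W K" unfolding K_def by (rule closedin_compact_space[OF c closedin_closure_of])
  have "compactin (subtopology W U) K" using Kc KU by (simp add: compactin_subtopology)
  then have "compactin (subtopology (half_space n) V) (\<psi> ` K)" by (rule image_compactin[OF _ psi])
  then have Cc: "compactin (Euclidean_space n) (\<psi> ` K)" and CV: "\<psi> ` K \<subseteq> V"
    unfolding shV compactin_subtopology by auto
  obtain \<epsilon> where eps: "\<epsilon> > 0" "\<And>z s. z \<in> \<psi> ` K \<Longrightarrow> 0 \<le> s \<Longrightarrow> s \<le> \<epsilon> \<Longrightarrow> sh z s \<in> V"
    using eps_push[OF n UV(3) Cc CV] by blast
  have u01: "\<And>y. y \<in> topspace W \<Longrightarrow> 0 \<le> u y \<and> u y \<le> 1" by (rule b(7))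
  have srange: "0 \<le> t * \<epsilon> * u y \<and> t * \<epsilon> * u y \<le> \<epsilon>" if "0 \<le> t" "t \<le> 1" "y \<in> topspace W" for t y
  proof -
    have "0 \<le> u y" "u y \<le> 1" using u01[OF that(3)] by auto
    then have "t * u y \<le> 1 * 1" using that by (intro mult_mono) auto
    then have "t * \<epsilon> * u y \<le> \<epsilon>" using eps(1) by (simp add: mult.commute mult.left_commute mult_le_cancel_left1)
    moreover have "0 \<le> t * \<epsilon> * u y" using that eps(1) \<open>0 \<le> u y\<close> by simp
    ultimately show ?thesis by simp
  qed
  have RANGE: "sh (\<psi> y) (t * \<epsilon> * u y) \<in> V" if "0 \<le> t" "t \<le> 1" "y \<in> U" for t y
  proof (cases "y \<in> K")
    case True
    then show ?thesis using eps(2)[of "\<psi> y" "t * \<epsilon> * u y"] srange[OF that(1,2)] that(3) UW by blast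
  next
    case False
    then have "y \<notin> Q2" using Q2K by blast
    then have "u y = 0" using b(9) that(3) UW by blast
    then show ?thesis using psiV[OF that(3)] by simp
  qed
  have INT: "\<psi>' (sh (\<psi> y) s) \<in> manifold_interior W" if "y \<in> U" "0 < s" "sh (\<psi> y) s \<in> V" for y s
  proof (rule interior_pt[OF n UV(1) hm UV(3) that(3)])
    have "\<psi> y \<in> H" using psiV[OF that(1)] VH by blast
    then have "\<psi> y 0 \<ge> 0" using n unfolding H_def by simp
    then show "0 < sh (\<psi> y) s 0" using that(2) by simp
  qed
  define p where "p = (\<lambda>(t, y). if y \<in> U then \<psi>' (sh (\<psi> y) (t * \<epsilon> * u y)) else y)"
  let ?P = "prod_topology (top_of_set {0..1::real}) W"
  have o01: "openin (top_of_set {0..1::real}) {0..1}" by (metis openin_topspace topspace_euclidean_subtopology)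
  have oK: "openin W (topspace W - K)" unfolding K_def by (rule openin_diff) auto
  let ?T = "\<lambda>b. if b then {0..1::real} \<times> U else {0..1} \<times> (topspace W - K)"
  have cont: "continuous_map ?P W p"
  proof (rule pasting_lemma[where I="UNIV::bool set" and T="?T" and f="\<lambda>_. p"])
    fix b :: bool
    show "openin ?P (?T b)"
      using o01 UV(1) oK by (cases b) (simp_all add: openin_prod_Times_iff)
    show "continuous_map (subtopology ?P (?T b)) W p"
    proof (cases b)
      case True
      let ?S = "subtopology ?P ({0..1::real} \<times> U)"
      have sndW: "continuous_map ?S W snd"
        by (rule continuous_map_from_subtopology[OF continuous_map_snd])
      have snd1: "continuous_map ?S (subtopology W U) snd"
        using sndW by (auto simp: continuous_map_in_subtopology)
      have fst1: "continuous_map ?S euclideanreal fst"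
        by (rule continuous_map_from_subtopology[OF cm_fst01])
      have A: "continuous_map ?S (subtopology (half_space n) V) (\<lambda>q. \<psi> (snd q))"
        using continuous_map_compose[OF snd1 psi] by (simp add: o_def)
      have A': "continuous_map ?S (Euclidean_space n) (\<lambda>q. \<psi> (snd q))"
        using A unfolding shV by (rule continuous_map_into_fulltopology)
      have uS: "continuous_map ?S euclideanreal (\<lambda>q. u (snd q))"
        using continuous_map_compose[OF sndW b(6)] by (simp add: o_def)
      have sfun: "continuous_map ?S euclideanreal (\<lambda>q. fst q * \<epsilon> * u (snd q))"
        by (intro continuous_map_real_mult fst1 uS) simp
      have B: "continuous_map ?S (Euclidean_space n) (\<lambda>q. sh (\<psi> (snd q)) (fst q * \<epsilon> * u (snd q)))"
        unfolding sh_def by (rule cm_shift[OF n A' sfun])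
      have "(\<lambda>q. sh (\<psi> (snd q)) (fst q * \<epsilon> * u (snd q))) ` topspace ?S \<subseteq> H \<inter> V"
      proof
        fix z assume "z \<in> (\<lambda>q. sh (\<psi> (snd q)) (fst q * \<epsilon> * u (snd q))) ` topspace ?S"
        then obtain t y where ty: "t \<in> {0..1}" "y \<in> U" "z = sh (\<psi> y) (t * \<epsilon> * u y)" by auto
        then have "z \<in> V" using RANGE by simp
        then show "z \<in> H \<inter> V" using VH by blast
      qed
      then have B': "continuous_map ?S (subtopology (half_space n) V) (\<lambda>q. sh (\<psi> (snd q)) (fst q * \<epsilon> * u (snd q)))"
        unfolding shV using B by (auto simp: continuous_map_in_subtopology Pi_iff image_subset_iff)
      have C: "continuous_map ?S W (\<lambda>q. \<psi>' (sh (\<psi> (snd q)) (fst q * \<epsilon> * u (snd q))))"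
        using continuous_map_into_fulltopology[OF continuous_map_compose[OF B' psi']] by (simp add: o_def)
      have "continuous_map ?S W p"
      proof (rule continuous_map_eq[OF C])
        fix q assume "q \<in> topspace ?S"
        then obtain t y where "q = (t, y)" "y \<in> U" by auto
        then show "\<psi>' (sh (\<psi> (snd q)) (fst q * \<epsilon> * u (snd q))) = p q" by (simp add: p_def)
      qed
      then show ?thesis using True by simp
    next
      case False
      let ?S = "subtopology ?P ({0..1::real} \<times> (topspace W - K))"
      have sndW: "continuous_map ?S W snd"
        by (rule continuous_map_from_subtopology[OF continuous_map_snd])
      have "continuous_map ?S W p"
      proof (rule continuous_map_eq[OF sndW])
        fix q assume "q \<in> topspace ?S"
        then obtain t y where q: "q = (t, y)" "y \<in> topspace W" "y \<notin> K" by auto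
        show "snd q = p q"
        proof (cases "y \<in> U")
          case True
          have "y \<notin> Q2" using q Q2K by blast
          then have "u y = 0" using b(9) q by blast
          then show ?thesis using q True inv1[of y] by (simp add: p_def)
        next
          case False then show ?thesis using q by (simp add: p_def)
        qed
      qed
      then show ?thesis using False by simp
    qed
  next
    fix q assume q: "q \<in> topspace ?P"
    then obtain t y where ty: "q = (t, y)" "t \<in> {0..1}" "y \<in> topspace W" by auto
    show "\<exists>j. j \<in> UNIV \<and> q \<in> ?T j \<and> p q = p q"
    proof (cases "y \<in> U")
      case True then show ?thesis using ty by (intro exI[of _ True]) auto
    next
      case False then show ?thesis using ty KU by (intro exI[of _ False]) auto
    qed
  qed auto
  show ?thesis
  proof (rule that[OF b(1,2) cont])
    fix y assume y: "y \<in> topspace W"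
    show "p (0, y) = y"
    proof (cases "y \<in> U")
      case True then show ?thesis using inv1[of y] y by (simp add: p_def)
    next
      case False then show ?thesis by (simp add: p_def)
    qed
  next
    fix t :: real and y assume t: "0 < t" "t \<le> 1" and y: "y \<in> Q"
    have yU: "y \<in> U" using y QU by blast
    have "u y = 1" using b(8) y by blast
    then have "0 < t * \<epsilon> * u y" using t eps(1) by simp
    moreover have "sh (\<psi> y) (t * \<epsilon> * u y) \<in> V" using RANGE t yU by simp
    ultimately show "p (t, y) \<in> manifold_interior W" using INT[OF yU] yU by (simp add: p_def)
  next
    fix t :: real and y assume t: "0 \<le> t" "t \<le> 1" and y: "y \<in> topspace W"
    show "p (t, y) = y \<or> p (t, y) \<in> manifold_interior W"
    proof (cases "y \<in> U")
      case False then show ?thesis by (simp add: p_def)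
    next
      case True
      show ?thesis
      proof (cases "t * \<epsilon> * u y = 0")
        case z: True
        have "p (t, y) = \<psi>' (\<psi> y)" using True by (simp add: p_def z)
        then show ?thesis using inv1[of y] y True by simp
      next
        case False
        then have "0 < t * \<epsilon> * u y" using srange[OF t y] by linarith
        then show ?thesis using INT[OF True _ RANGE[OF t True]] True by (simp add: p_def)
      qed
    qed
  qed
qed


definition lp_ok :: "'a topology \<Rightarrow> 'a set \<Rightarrow> 'a set \<Rightarrow> (real \<times> 'a \<Rightarrow> 'a) \<Rightarrow> bool" where
  "lp_ok W I Q p \<longleftrightarrow> openin W Q \<and> continuous_map (prod_topology (top_of_set {0..1::real}) W) W p \<and>
     (\<forall>y\<in>topspace W. p (0, y) = y) \<and>
     (\<forall>t y. 0 < t \<longrightarrow> t \<le> 1 \<longrightarrow> y \<in> Q \<longrightarrow> p (t, y) \<in> I) \<and>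
     (\<forall>t y. 0 \<le> t \<longrightarrow> t \<le> 1 \<longrightarrow> y \<in> topspace W \<longrightarrow> p (t, y) = y \<or> p (t, y) \<in> I)"

fun comp_push :: "('a set \<times> (real \<times> 'a \<Rightarrow> 'a)) list \<Rightarrow> real \<times> 'a \<Rightarrow> 'a" where
  "comp_push [] = snd"
| "comp_push (qp # qs) = (\<lambda>r. snd qp (fst r, comp_push qs r))"

lemma comp_push_props:
  assumes ok: "\<And>qp. qp \<in> set qs \<Longrightarrow> lp_ok W I (fst qp) (snd qp)" and I: "I \<subseteq> topspace W"
  shows "continuous_map (prod_topology (top_of_set {0..1::real}) W) W (comp_push qs)
    \<and> (\<forall>y\<in>topspace W. comp_push qs (0, y) = y)
    \<and> (\<forall>t y. 0 < t \<longrightarrow> t \<le> 1 \<longrightarrow> y \<in> topspace W \<longrightarrow>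
          comp_push qs (t, y) \<in> I \<or> (comp_push qs (t, y) = y \<and> y \<notin> \<Union> (fst ` set qs)))"
  using ok
proof (induction qs)
  case Nil
  then show ?case by (simp add: continuous_map_snd)
next
  case (Cons qp qs)
  let ?P = "prod_topology (top_of_set {0..1::real}) W"
  have IH: "continuous_map ?P W (comp_push qs)" "\<forall>y\<in>topspace W. comp_push qs (0, y) = y"
    "\<forall>t y. 0 < t \<longrightarrow> t \<le> 1 \<longrightarrow> y \<in> topspace W \<longrightarrow>
          comp_push qs (t, y) \<in> I \<or> (comp_push qs (t, y) = y \<and> y \<notin> \<Union> (fst ` set qs))"
    using Cons by auto
  have okq: "lp_ok W I (fst qp) (snd qp)" using Cons.prems by simp
  have pc: "continuous_map ?P W (snd qp)" and p0: "\<forall>y\<in>topspace W. snd qp (0, y) = y"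
    and pQ: "\<forall>t y. 0 < t \<longrightarrow> t \<le> 1 \<longrightarrow> y \<in> fst qp \<longrightarrow> snd qp (t, y) \<in> I"
    and pI: "\<forall>t y. 0 \<le> t \<longrightarrow> t \<le> 1 \<longrightarrow> y \<in> topspace W \<longrightarrow> snd qp (t, y) = y \<or> snd qp (t, y) \<in> I"
    using okq unfolding lp_ok_def by blast+
  have pair: "continuous_map ?P ?P (\<lambda>r. (fst r, comp_push qs r))"
    by (intro continuous_map_pairedI continuous_map_fst IH(1))
  have c: "continuous_map ?P W (comp_push (qp # qs))"
    using continuous_map_compose[OF pair pc] by (simp add: o_def)
  have z: "\<forall>y\<in>topspace W. comp_push (qp # qs) (0, y) = y" using IH(2) p0 by simp
  have ctop: "comp_push qs (t, y) \<in> topspace W" if "0 \<le> t" "t \<le> 1" "y \<in> topspace W" for t y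
    using IH(1) that unfolding continuous_map_def by auto
  have "comp_push (qp # qs) (t, y) \<in> I \<or> (comp_push (qp # qs) (t, y) = y \<and> y \<notin> \<Union> (fst ` set (qp # qs)))"
    if t: "0 < t" "t \<le> 1" and y: "y \<in> topspace W" for t y
  proof -
    have e: "comp_push (qp # qs) (t, y) = snd qp (t, comp_push qs (t, y))" by simp
    have zt: "comp_push qs (t, y) \<in> topspace W" using ctop t y by simp
    consider (a) "comp_push qs (t, y) \<in> I" | (b) "comp_push qs (t, y) = y" "y \<notin> \<Union> (fst ` set qs)"
      using IH(3) t y by blast
    then show ?thesis
    proof cases
      case a
      have t0: "0 \<le> t" using t by simp
      have "snd qp (t, comp_push qs (t, y)) = comp_push qs (t, y) \<or> snd qp (t, comp_push qs (t, y)) \<in> I"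
        using pI t0 t(2) zt by blast
      then have "snd qp (t, comp_push qs (t, y)) \<in> I" using a by auto
      then show ?thesis using e by simp
    next
      case b
      show ?thesis
      proof (cases "y \<in> fst qp")
        case True
        then have "snd qp (t, y) \<in> I" using pQ t by blast
        then show ?thesis using e b by simp
      next
        case False
        have t0: "0 \<le> t" using t by simp
        have "snd qp (t, y) = y \<or> snd qp (t, y) \<in> I" using pI t0 t(2) y by blast
        then show ?thesis using e b False by auto
      qed
    qed
  qed
  then show ?case using c z by blast
qed

lemma all_interior_dim0:
  assumes "manifold_with_boundary_dim 0 W" "x \<in> topspace W"
  shows "x \<in> manifold_interior W"
proof -
  obtain U V where UV: "openin W U" "x \<in> U" "openin (half_space 0) V"
    "subtopology W U homeomorphic_space subtopology (half_space 0) V"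
    using assms unfolding manifold_with_boundary_dim_def by blast
  have "half_space 0 = Euclidean_space 0" by (simp add: half_space_def)
  then show ?thesis unfolding manifold_interior_def using UV assms(2) by auto
qed

lemma exists_good:
  assumes "manifold_with_boundary W" "compact_space W"
  shows "\<exists>\<rho> h. good_data W (manifold_interior W) \<rho> h"
proof -
  obtain n where M: "manifold_with_boundary_dim n W"
    using assms(1) unfolding manifold_with_boundary_def by blast
  have Hs: "Hausdorff_space W" using M unfolding manifold_with_boundary_dim_def by blast
  let ?I = "manifold_interior W"
  let ?P = "prod_topology (top_of_set {0..1::real}) W"
  have IW: "?I \<subseteq> topspace W" unfolding manifold_interior_def by blast
  have Bc: "closedin W (topspace W - ?I)" using interior_open by (rule closedin_diff[OF closedin_topspace])
  obtain g where g: "continuous_map W euclideanreal g"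
    "\<And>x. x \<in> topspace W \<Longrightarrow> 0 \<le> g x \<and> g x \<le> 1 \<and> (g x = 0 \<longleftrightarrow> x \<in> topspace W - ?I)"
    using loc_metr_zero_set[OF assms(2) Hs loc_metr[OF M] Bc] by blast
  have gv: "\<forall>x\<in>topspace W. 0 \<le> g x \<and> g x \<le> 1 \<and> (g x = 0 \<longleftrightarrow> x \<notin> ?I)"
    using g(2) by auto
  obtain h where h: "continuous_map ?P W h" "\<forall>x\<in>topspace W. h (0, x) = x"
    "\<forall>t x. 0 < t \<longrightarrow> t \<le> 1 \<longrightarrow> x \<in> topspace W \<longrightarrow> h (t, x) \<in> ?I"
  proof (cases "n = 0")
    case True
    show ?thesis
    proof (rule that[of snd])
      show "continuous_map ?P W snd" by (rule continuous_map_snd)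
      show "\<forall>x\<in>topspace W. snd (0::real, x) = x" by simp
      show "\<forall>t x. 0 < t \<longrightarrow> t \<le> 1 \<longrightarrow> x \<in> topspace W \<longrightarrow> snd (t, x) \<in> ?I"
        using all_interior_dim0 M True by auto
    qed
  next
    case False
    have ex: "\<exists>Q p. x \<in> Q \<and> lp_ok W ?I Q p" if x: "x \<in> topspace W" for x
    proof -
      obtain Q p where "openin W Q" "x \<in> Q"
        "continuous_map ?P W p"
        "\<And>y. y \<in> topspace W \<Longrightarrow> p (0, y) = y"
        "\<And>t y. 0 < t \<Longrightarrow> t \<le> 1 \<Longrightarrow> y \<in> Q \<Longrightarrow> p (t, y) \<in> ?I"
        "\<And>t y. 0 \<le> t \<Longrightarrow> t \<le> 1 \<Longrightarrow> y \<in> topspace W \<Longrightarrow> p (t, y) = y \<or> p (t, y) \<in> ?I"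
        using local_push[OF M assms(2) False x] by blast
      then show ?thesis unfolding lp_ok_def by blast
    qed
    then obtain Q p where Qp: "\<And>x. x \<in> topspace W \<Longrightarrow> x \<in> Q x \<and> lp_ok W ?I (Q x) (p x)"
      by metis
    have "compactin W (topspace W)" using assms(2) compact_space_def by blast
    moreover have "\<And>V. V \<in> Q ` topspace W \<Longrightarrow> openin W V" using Qp unfolding lp_ok_def by blast
    moreover have "topspace W \<subseteq> \<Union> (Q ` topspace W)" using Qp by blast
    ultimately obtain \<F> where \<F>: "finite \<F>" "\<F> \<subseteq> Q ` topspace W" "topspace W \<subseteq> \<Union>\<F>"
      using compactinD[of W "topspace W" "Q ` topspace W"] by blast
    then obtain F where F: "finite F" "F \<subseteq> topspace W" "\<F> = Q ` F"
      using finite_subset_image[OF \<F>(1,2)] by blast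
    obtain xs where xs: "set xs = F" using finite_list[OF F(1)] by blast
    define qs where "qs = map (\<lambda>x. (Q x, p x)) xs"
    have ok: "\<And>qp. qp \<in> set qs \<Longrightarrow> lp_ok W ?I (fst qp) (snd qp)"
      using Qp F(2) xs unfolding qs_def by auto
    have cov: "topspace W \<subseteq> \<Union> (fst ` set qs)"
      using \<F>(3) F(3) xs unfolding qs_def by (simp add: image_image)
    have cp: "continuous_map ?P W (comp_push qs) \<and> (\<forall>y\<in>topspace W. comp_push qs (0, y) = y)
      \<and> (\<forall>t y. 0 < t \<longrightarrow> t \<le> 1 \<longrightarrow> y \<in> topspace W \<longrightarrow>
          comp_push qs (t, y) \<in> ?I \<or> (comp_push qs (t, y) = y \<and> y \<notin> \<Union> (fst ` set qs)))"
      by (rule comp_push_props[OF ok IW])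
    show ?thesis
    proof (rule that[of "comp_push qs"])
      show "continuous_map ?P W (comp_push qs)" using cp by blast
      show "\<forall>x\<in>topspace W. comp_push qs (0, x) = x" using cp by blast
      show "\<forall>t x. 0 < t \<longrightarrow> t \<le> 1 \<longrightarrow> x \<in> topspace W \<longrightarrow> comp_push qs (t, x) \<in> ?I"
        using cp cov by blast
    qed
  qed
  show ?thesis
    unfolding good_data_def using IW g(1) gv h by blast
qed


lemma mwb_Hausdorff: "manifold_with_boundary W \<Longrightarrow> Hausdorff_space W"
  unfolding manifold_with_boundary_def manifold_with_boundary_dim_def by blast

theorem lemma3p6:
  fixes M :: "'a topology" and N :: "'b topology"
    and W1 :: "'u topology" and W2 :: "'v topology"
    and X :: "'c topology" and A :: "'c set"
    and Y :: "'d topology" and B :: "'d set"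
  assumes "model_via W1 M X A"
    and "model_via W2 N Y B"
    and "pair_homotopy_equivalent X A Y B"
  shows "proper_homotopy_equivalent M N"
proof -
  have t1: "tame_compactification W1 M" and p1: "pair_homotopy_equivalent X A W1 (manifold_boundary W1)"
    using assms(1) unfolding model_via_def by auto
  have t2: "tame_compactification W2 N" and p2: "pair_homotopy_equivalent Y B W2 (manifold_boundary W2)"
    using assms(2) unfolding model_via_def by auto
  have m1: "manifold_with_boundary W1" "compact_space W1" "M homeomorphic_space subtopology W1 (manifold_interior W1)"
    using t1 unfolding tame_compactification_def by auto
  have m2: "manifold_with_boundary W2" "compact_space W2" "N homeomorphic_space subtopology W2 (manifold_interior W2)"
    using t2 unfolding tame_compactification_def by auto
  have "pair_homotopy_equivalent W1 (manifold_boundary W1) Y B"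
    using pair_he_trans[OF pair_he_sym[OF p1] assms(3)] .
  then have "pair_homotopy_equivalent W1 (manifold_boundary W1) W2 (manifold_boundary W2)"
    using pair_he_trans p2 by blast
  then have phe: "pair_homotopy_equivalent W1 (topspace W1 - manifold_interior W1) W2 (topspace W2 - manifold_interior W2)"
    unfolding manifold_boundary_def .
  obtain \<rho>1 h1 where d1: "good_data W1 (manifold_interior W1) \<rho>1 h1" using exists_good m1 by blast
  obtain \<rho>2 h2 where d2: "good_data W2 (manifold_interior W2) \<rho>2 h2" using exists_good m2 by blast
  have "proper_homotopy_equivalent (subtopology W1 (manifold_interior W1)) (subtopology W2 (manifold_interior W2))"
    using main_C[OF d1 d2 m1(2) m2(2) mwb_Hausdorff[OF m1(1)] mwb_Hausdorff[OF m2(1)] phe] .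
  then show ?thesis using phe_homeo m1(3) m2(3) by blast
qed


end
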